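(* The $(T,* )$-ideal $I(G,* )$ is generated, as a $(T,* )$-ideal, by its elements of the form $$f=\sum_{\alpha\in W_n} a_\alpha\,\alpha\big(x_{1,\sigma_1}x_{2,\sigma_2}\cdots x_{n,\sigma_n}\big),$$ where $n\ge 1$, $\sigma_1,\dots,\sigma_n\in G$ and $a_\alpha\in\mathbb{Q}$.
   Context: Let $G=\{g_1=e,g_2,\dots,g_k\}$ be a finite group of order $k$. Index the rows and columns of $k\times k$ complex matrices by $G$, let $E_{a,b}$ ($a,b\in G$) be the matrix units, and for $g\in G$ let $P_g=\sum_{h\in G}E_{h,hg}$. The $G$-crossed-product grading on $M_k(\mathbb{C})$ is $M_k(\mathbb{C})=\bigoplus_{g\in G}M_k(\mathbb{C})_g$ with $M_k(\mathbb{C})_g=\{DP_g: D \text{ diagonal}\}$. The involution $*$ on $M_k(\mathbb{C})$ is the transpose. Let $F=\mathbb{Q}\{x_{i,g},x_{i,g}^*: i\ge1, g\in G\}$ be the free associative $\mathbb{Q}$-algebra on these symbols, with the involution $*$ (the $\mathbb{Q}$-linear anti-automorphism of order 2 exchanging $x_{i,g}$ and $x_{i,g}^*$) and the $G$-grading $\deg x_{i,g}=g$, $\deg x_{i,g}^*=g^{-1}$. A graded $*$-identity is an $f\in F$ that vanishes under every substitution $x_{i,g}\mapsto A_{i,g}$, $x^*_{i,g}\mapsto A_{i,g}^{T}$ with $A_{i,g}\in M_k(\mathbb{C})_g$; $I(G,* )$ denotes the set of all graded $*$-identities. A $(T,* )$-ideal is an ideal of $F$ stable under $*$ and under every algebra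 endomorphism $\varphi$ of $F$ such that $\varphi(x_{i,g})$ is homogeneous of degree $g$ and $\varphi(x^*_{i,g})=\varphi(x_{i,g})^*$ for all $i,g$. Let $W_n=S_n\times C_2^n$ with $C_2=\{1,-1\}$. For $\alpha=(\pi,\gamma)$, $\gamma=(\gamma_1,\dots,\gamma_n)$, and a monomial $m=x_{i_1,\sigma_{i_1}}^{\epsilon_{i_1}}\cdots x_{i_n,\sigma_{i_n}}^{\epsilon_{i_n}}$ with $\{i_1,\dots,i_n\}=\{1,\dots,n\}$ and each $\epsilon_j\in\{\text{nothing},*\}$, define $\alpha(m)=x_{\pi(i_1),\sigma_{\pi(i_1)}}^{\delta_{\pi(i_1)}}\cdots x_{\pi(i_n),\sigma_{\pi(i_n)}}^{\delta_{\pi(i_n)}}$, where $\delta_j=\epsilon_j$ if $\gamma_j=1$ and $\delta_j$ is the other element of $\{\text{nothing},*\}$ if $\gamma_j=-1$. *)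

theory Defs
  imports "HOL-Algebra.Group" "HOL-Library.Poly_Mapping" "HOL-Combinatorics.Permutations" Complex_Main
begin

(* A letter (i, g, b) stands for x_{i,g} if b = False and for x_{i,g}^* if b = True. *)
type_synonym 'g letter = "nat \<times> 'g \<times> bool"

(* Elements of the free associative Q-algebra: finitely supported Q-combinations of words. *)
type_synonym 'g ncpoly = "'g letter list \<Rightarrow>\<^sub>0 rat"

definition letter_ok :: "('g, 'm) monoid_scheme \<Rightarrow> 'g letter \<Rightarrow> bool" where
  "letter_ok G l = (1 \<le> fst l \<and> fst (snd l) \<in> carrier G)"

(* the underlying set of F = Q{x_{i,g}, x_{i,g}^* : i >= 1, g in G} *)
definition FA :: "('g, 'm) monoid_scheme \<Rightarrow> 'g ncpoly set" where
  "FA G = {p. \<forall>w\<in>Poly_Mapping.keys p. \<forall>l\<in>set w. letter_ok G l}"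

definition ncmono :: "'g letter list \<Rightarrow> 'g ncpoly" where
  "ncmono w = Poly_Mapping.single w 1"

definition pmul :: "'g ncpoly \<Rightarrow> 'g ncpoly \<Rightarrow> 'g ncpoly" where
  "pmul p q = (\<Sum>u\<in>Poly_Mapping.keys p. \<Sum>v\<in>Poly_Mapping.keys q. Poly_Mapping.single (u @ v) (Poly_Mapping.lookup p u * Poly_Mapping.lookup q v))"

definition smult :: "rat \<Rightarrow> 'g ncpoly \<Rightarrow> 'g ncpoly" where
  "smult c p = pmul (Poly_Mapping.single [] c) p"

definition lstar :: "'g letter \<Rightarrow> 'g letter" where
  "lstar l = (fst l, fst (snd l), \<not> snd (snd l))"

definition wstar :: "'g letter list \<Rightarrow> 'g letter list" where
  "wstar w = rev (map lstar w)"

definition pstar :: "'g ncpoly \<Rightarrow> 'g ncpoly" where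
  "pstar p = (\<Sum>w\<in>Poly_Mapping.keys p. Poly_Mapping.single (wstar w) (Poly_Mapping.lookup p w))"

definition ldeg :: "('g, 'm) monoid_scheme \<Rightarrow> 'g letter \<Rightarrow> 'g" where
  "ldeg G l = (if snd (snd l) then inv\<^bsub>G\<^esub> (fst (snd l)) else fst (snd l))"

definition wdeg :: "('g, 'm) monoid_scheme \<Rightarrow> 'g letter list \<Rightarrow> 'g" where
  "wdeg G w = foldr (\<lambda>l h. ldeg G l \<otimes>\<^bsub>G\<^esub> h) w \<one>\<^bsub>G\<^esub>"

definition homogeneous :: "('g, 'm) monoid_scheme \<Rightarrow> 'g \<Rightarrow> 'g ncpoly \<Rightarrow> bool" where
  "homogeneous G h p = (\<forall>w\<in>Poly_Mapping.keys p. wdeg G w = h)"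

type_synonym 'g mat = "'g \<Rightarrow> 'g \<Rightarrow> complex"

definition mmul :: "('g, 'm) monoid_scheme \<Rightarrow> 'g mat \<Rightarrow> 'g mat \<Rightarrow> 'g mat" where
  "mmul G A B = (\<lambda>a c. \<Sum>b\<in>carrier G. A a b * B b c)"

definition mone :: "'g mat" where
  "mone = (\<lambda>a c. if a = c then 1 else 0)"

definition mtrans :: "'g mat \<Rightarrow> 'g mat" where
  "mtrans A = (\<lambda>a c. A c a)"

(* the homogeneous component M_k(C)_g = {D P_g : D diagonal}, P_g = sum_h E_{h,hg}:
   a matrix lies in it iff its only possibly nonzero entries are at positions (a, a g) *)
definition graded_comp :: "('g, 'm) monoid_scheme \<Rightarrow> 'g \<Rightarrow> 'g mat \<Rightarrow> bool" where
  "graded_comp G g A = (\<forall>a\<in>carrier G. \<forall>c\<in>carrier G. c \<noteq> a \<otimes>\<^bsub>G\<^esub> g \<longrightarrow> A a c = 0)"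

definition leval :: "(nat \<Rightarrow> 'g \<Rightarrow> 'g mat) \<Rightarrow> 'g letter \<Rightarrow> 'g mat" where
  "leval A l = (if snd (snd l) then mtrans (A (fst l) (fst (snd l))) else A (fst l) (fst (snd l)))"

definition weval :: "('g, 'm) monoid_scheme \<Rightarrow> (nat \<Rightarrow> 'g \<Rightarrow> 'g mat) \<Rightarrow> 'g letter list \<Rightarrow> 'g mat" where
  "weval G A w = foldr (\<lambda>l M. mmul G (leval A l) M) w mone"

definition peval :: "('g, 'm) monoid_scheme \<Rightarrow> (nat \<Rightarrow> 'g \<Rightarrow> 'g mat) \<Rightarrow> 'g ncpoly \<Rightarrow> 'g mat" where
  "peval G A p = (\<lambda>a c. \<Sum>w\<in>Poly_Mapping.keys p. of_rat (Poly_Mapping.lookup p w) * weval G A w a c)"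

definition graded_subst :: "('g, 'm) monoid_scheme \<Rightarrow> (nat \<Rightarrow> 'g \<Rightarrow> 'g mat) \<Rightarrow> bool" where
  "graded_subst G A = (\<forall>i g. 1 \<le> i \<longrightarrow> g \<in> carrier G \<longrightarrow> graded_comp G g (A i g))"

definition graded_star_ids :: "('g, 'm) monoid_scheme \<Rightarrow> 'g ncpoly set" where
  "graded_star_ids G = {f \<in> FA G. \<forall>A. graded_subst G A \<longrightarrow>
       (\<forall>a\<in>carrier G. \<forall>c\<in>carrier G. peval G A f a c = 0)}"

(* graded *-endomorphisms of F: determined by x_{i,g} |-> s i g (homogeneous of degree g),
   x_{i,g}^* |-> (s i g)^* *)
definition endo_data :: "('g, 'm) monoid_scheme \<Rightarrow> (nat \<Rightarrow> 'g \<Rightarrow> 'g ncpoly) \<Rightarrow> bool" where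
  "endo_data G s = (\<forall>i g. 1 \<le> i \<longrightarrow> g \<in> carrier G \<longrightarrow> s i g \<in> FA G \<and> homogeneous G g (s i g))"

definition lsubst :: "(nat \<Rightarrow> 'g \<Rightarrow> 'g ncpoly) \<Rightarrow> 'g letter \<Rightarrow> 'g ncpoly" where
  "lsubst s l = (if snd (snd l) then pstar (s (fst l) (fst (snd l))) else s (fst l) (fst (snd l)))"

definition wsubst :: "(nat \<Rightarrow> 'g \<Rightarrow> 'g ncpoly) \<Rightarrow> 'g letter list \<Rightarrow> 'g ncpoly" where
  "wsubst s w = foldr (\<lambda>l q. pmul (lsubst s l) q) w (ncmono [])"

definition psubst :: "(nat \<Rightarrow> 'g \<Rightarrow> 'g ncpoly) \<Rightarrow> 'g ncpoly \<Rightarrow> 'g ncpoly" where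
  "psubst s p = (\<Sum>w\<in>Poly_Mapping.keys p. smult (Poly_Mapping.lookup p w) (wsubst s w))"

definition tstar_ideal :: "('g, 'm) monoid_scheme \<Rightarrow> 'g ncpoly set \<Rightarrow> bool" where
  "tstar_ideal G I =
     (I \<subseteq> FA G \<and> 0 \<in> I \<and>
      (\<forall>p\<in>I. \<forall>q\<in>I. p + q \<in> I) \<and>
      (\<forall>p\<in>I. - p \<in> I) \<and>
      (\<forall>p\<in>I. \<forall>q\<in>FA G. pmul q p \<in> I \<and> pmul p q \<in> I) \<and>
      (\<forall>p\<in>I. pstar p \<in> I) \<and>
      (\<forall>s. endo_data G s \<longrightarrow> (\<forall>p\<in>I. psubst s p \<in> I)))"

definition tstar_hull :: "('g, 'm) monoid_scheme \<Rightarrow> 'g ncpoly set \<Rightarrow> 'g ncpoly set" where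
  "tstar_hull G S = \<Inter>{I. tstar_ideal G I \<and> S \<subseteq> I}"

(* alpha(x_{1,sigma_1} ... x_{n,sigma_n}) for alpha = (pi, gamma) in W_n = S_n x C_2^n;
   gamma j = True encodes gamma_j = -1 *)
definition Wact_mono :: "nat \<Rightarrow> (nat \<Rightarrow> 'g) \<Rightarrow> (nat \<Rightarrow> nat) \<Rightarrow> (nat \<Rightarrow> bool) \<Rightarrow> 'g letter list" where
  "Wact_mono n \<sigma> \<pi> \<gamma> = map (\<lambda>j. (\<pi> j, \<sigma> (\<pi> j), \<gamma> (\<pi> j))) [1..<Suc n]"

definition Wsum :: "nat \<Rightarrow> (nat \<Rightarrow> 'g) \<Rightarrow> ((nat \<Rightarrow> nat) \<Rightarrow> (nat \<Rightarrow> bool) \<Rightarrow> rat) \<Rightarrow> 'g ncpoly" where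
  "Wsum n \<sigma> a = (\<Sum>\<pi>\<in>{\<pi>. \<pi> permutes {1..n}}. \<Sum>\<gamma>\<in>{\<gamma>. \<forall>j. \<gamma> j \<longrightarrow> j \<in> {1..n}}.
                    smult (a \<pi> \<gamma>) (ncmono (Wact_mono n \<sigma> \<pi> \<gamma>)))"

end

theory Submission
  imports Defs
begin

abbreviation lk where "lk \<equiv> Poly_Mapping.lookup"
abbreviation ks where "ks \<equiv> Poly_Mapping.keys"
abbreviation sg where "sg \<equiv> Poly_Mapping.single"

lemma lk_sg: "lk (sg a c) w = (if a = w then c else 0)"
  by (simp add: lookup_single when_def)

lemma pm_expand: "p = (\<Sum>u\<in>ks p. sg u (lk p u))"
  by (rule poly_mapping_eqI) (auto simp: lookup_sum lk_sg in_keys_iff)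

lemma pm_expand_sup: "finite U \<Longrightarrow> ks p \<subseteq> U \<Longrightarrow> p = (\<Sum>u\<in>U. sg u (lk p u))"
  apply (subst pm_expand)
  apply (rule sum.mono_neutral_left)
  by (auto simp: in_keys_iff)

lemma pmul_sup:
  assumes "finite U" "ks p \<subseteq> U" "finite V" "ks q \<subseteq> V"
  shows "pmul p q = (\<Sum>u\<in>U. \<Sum>v\<in>V. sg (u@v) (lk p u * lk q v))"
proof -
  have "pmul p q = (\<Sum>u\<in>ks p. \<Sum>v\<in>V. sg (u@v) (lk p u * lk q v))"
    unfolding pmul_def
    by (rule sum.cong[OF refl], rule sum.mono_neutral_left) (use assms in \<open>auto simp: in_keys_iff\<close>)
  also have "\<dots> = (\<Sum>u\<in>U. \<Sum>v\<in>V. sg (u@v) (lk p u * lk q v))"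
    by (rule sum.mono_neutral_left) (use assms in \<open>auto simp: in_keys_iff\<close>)
  finally show ?thesis .
qed

lemma pmul_add_left: "pmul (p + q) r = pmul p r + pmul q r"
proof -
  let ?U = "ks p \<union> ks q"
  have k: "ks (p+q) \<subseteq> ?U" by (rule keys_add)
  show ?thesis
    by (simp add: pmul_sup[OF _ k _ order_refl] pmul_sup[of ?U p "ks r" r] pmul_sup[of ?U q "ks r" r]
        lookup_add distrib_right single_add sum.distrib)
qed

lemma pmul_add_right: "pmul r (p + q) = pmul r p + pmul r q"
proof -
  let ?U = "ks p \<union> ks q"
  have k: "ks (p+q) \<subseteq> ?U" by (rule keys_add)
  show ?thesis
    by (simp add: pmul_sup[OF _ order_refl _ k] pmul_sup[of "ks r" r ?U p] pmul_sup[of "ks r" r ?U q]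
        lookup_add distrib_left single_add sum.distrib)
qed

lemma pmul_zero_left [simp]: "pmul 0 q = 0" by (simp add: pmul_def)
lemma pmul_zero_right [simp]: "pmul q 0 = 0" by (simp add: pmul_def)

lemma pmul_uminus_left: "pmul (- p) q = - pmul p q"
  using pmul_add_left[of p "-p" q] by (intro minus_unique[symmetric]) simp
lemma pmul_uminus_right: "pmul q (- p) = - pmul q p"
  using pmul_add_right[of q p "-p"] by (intro minus_unique[symmetric]) simp

lemma pmul_sum_left: "pmul (\<Sum>i\<in>A. f i) q = (\<Sum>i\<in>A. pmul (f i) q)"
  by (induction A rule: infinite_finite_induct) (auto simp: pmul_add_left)
lemma pmul_sum_right: "pmul q (\<Sum>i\<in>A. f i) = (\<Sum>i\<in>A. pmul q (f i))"
  by (induction A rule: infinite_finite_induct) (auto simp: pmul_add_right)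

lemma pmul_sg: "pmul (sg u a) (sg v b) = sg (u@v) (a*b)"
  by (subst pmul_sup[of "{u}" _ "{v}"]) auto

lemma pmul_sg_left: "pmul (sg a c) r = (\<Sum>w\<in>ks r. sg (a@w) (c * lk r w))"
  by (subst pmul_sup[of "{a}" _ "ks r"]) auto
lemma pmul_sg_right: "pmul p (sg a c) = (\<Sum>u\<in>ks p. sg (u@a) (lk p u * c))"
  by (subst pmul_sup[of "ks p" _ "{a}"]) auto

lemma pmul_assoc: "pmul (pmul p q) r = pmul p (pmul q r)"
proof -
  have "pmul (pmul p q) r = (\<Sum>u\<in>ks p. \<Sum>v\<in>ks q. \<Sum>w\<in>ks r. sg (u@v@w) (lk p u * lk q v * lk r w))"
    by (simp add: pmul_def[of p q] pmul_sum_left pmul_sg_left)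
  also have "\<dots> = (\<Sum>v\<in>ks q. \<Sum>w\<in>ks r. \<Sum>u\<in>ks p. sg (u@v@w) (lk p u * (lk q v * lk r w)))"
    by (subst sum.swap, rule sum.cong[OF refl], subst sum.swap) (simp add: mult.assoc)
  also have "\<dots> = pmul p (pmul q r)"
    by (simp add: pmul_def[of q r] pmul_sum_right pmul_sg_right)
  finally show ?thesis .
qed

lemma pmul_one_left [simp]: "pmul (ncmono []) p = p"
  unfolding ncmono_def
  by (subst (1 2) pm_expand) (simp add: pmul_sum_right pmul_sg)
lemma pmul_one_right [simp]: "pmul p (ncmono []) = p"
  unfolding ncmono_def
  by (subst (1 2) pm_expand) (simp add: pmul_sum_left pmul_sg)

lemma lookup_smult [simp]: "lk (smult c p) w = c * lk p w"
proof -
  have "smult c p = (\<Sum>v\<in>ks p. sg v (c * lk p v))"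
    unfolding smult_def by (subst pmul_sup[of "{[]}" _ "ks p"]) auto
  then show ?thesis
    by (auto simp: lookup_sum lk_sg in_keys_iff)
qed

lemma smult_sg [simp]: "smult c (sg w a) = sg w (c*a)"
  by (rule poly_mapping_eqI) (simp add: lk_sg)
lemma smult_add: "smult c (p+q) = smult c p + smult c q"
  by (rule poly_mapping_eqI) (simp add: lookup_add algebra_simps)
lemma smult_add_left: "smult (c+d) p = smult c p + smult d p"
  by (rule poly_mapping_eqI) (simp add: lookup_add algebra_simps)
lemma smult_smult [simp]: "smult c (smult d p) = smult (c*d) p"
  by (rule poly_mapping_eqI) (simp add: algebra_simps)
lemma smult_one [simp]: "smult 1 p = p"
  by (rule poly_mapping_eqI) simp
lemma smult_zero [simp]: "smult 0 p = 0" "smult c 0 = 0"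
  by (rule poly_mapping_eqI, simp)+
lemma smult_sum: "smult c (\<Sum>i\<in>A. f i) = (\<Sum>i\<in>A. smult c (f i))"
  by (induction A rule: infinite_finite_induct) (auto simp: smult_add)
lemma smult_minus_one: "smult (-1) p = - p"
  by (rule poly_mapping_eqI) simp
lemma pmul_smult_left: "pmul (smult c p) q = smult c (pmul p q)"
  by (simp add: smult_def pmul_assoc)
lemma keys_smult: "ks (smult c p) \<subseteq> ks p"
  by (auto simp: in_keys_iff)

lemma pmul_smult_right: "pmul p (smult c q) = smult c (pmul p q)"
  apply (subst pmul_sup[of "ks p" p "ks q" "smult c q"])
  apply (auto simp: keys_smult)[4]
  apply (rule poly_mapping_eqI)
  by (simp add: pmul_def lookup_sum lk_sg sum_distrib_left algebra_simps) (auto intro!: sum.cong)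


lemma sum_sup_zero:
  assumes "finite U" "ks p \<subseteq> U" "\<And>w. F w 0 = 0"
  shows "(\<Sum>w\<in>ks p. F w (lk p w)) = (\<Sum>w\<in>U. F w (lk p w))"
  by (rule sum.mono_neutral_left) (use assms in \<open>auto simp: in_keys_iff\<close>)

lemma pstar_sup: "finite U \<Longrightarrow> ks p \<subseteq> U \<Longrightarrow> pstar p = (\<Sum>w\<in>U. sg (wstar w) (lk p w))"
  unfolding pstar_def by (rule sum_sup_zero) auto

lemma pstar_add: "pstar (p + q) = pstar p + pstar q"
proof -
  let ?U = "ks p \<union> ks q"
  show ?thesis
    by (simp add: pstar_sup[of ?U "p+q"] pstar_sup[of ?U p] pstar_sup[of ?U q] keys_add
        lookup_add single_add sum.distrib)
qed
lemma pstar_zero [simp]: "pstar 0 = 0" by (simp add: pstar_def)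
lemma pstar_uminus: "pstar (- p) = - pstar p"
  using pstar_add[of p "-p"] by (intro minus_unique[symmetric]) simp
lemma pstar_sum: "pstar (\<Sum>i\<in>A. f i) = (\<Sum>i\<in>A. pstar (f i))"
  by (induction A rule: infinite_finite_induct) (auto simp: pstar_add)
lemma pstar_sg [simp]: "pstar (sg w c) = sg (wstar w) c"
  by (subst pstar_sup[of "{w}"]) auto
lemma pstar_smult: "pstar (smult c p) = smult c (pstar p)"
  by (subst (1 2) pm_expand) (simp add: pstar_sum smult_sum)
lemma lstar_lstar [simp]: "lstar (lstar l) = l"
  by (simp add: lstar_def)
lemma wstar_wstar [simp]: "wstar (wstar w) = w"
  by (simp add: wstar_def rev_map comp_def)
lemma pstar_pstar [simp]: "pstar (pstar p) = p"
  unfolding pstar_def[of p] by (simp add: pstar_sum) (rule pm_expand[symmetric])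
lemma pstar_ncmono [simp]: "pstar (ncmono [l]) = ncmono [lstar l]"
  by (simp add: ncmono_def wstar_def)

lemma wsubst_Nil [simp]: "wsubst s [] = ncmono []" by (simp add: wsubst_def)
lemma wsubst_Cons [simp]: "wsubst s (l # w) = pmul (lsubst s l) (wsubst s w)"
  by (simp add: wsubst_def)
lemma wsubst_append: "wsubst s (u @ v) = pmul (wsubst s u) (wsubst s v)"
  by (induction u) (simp_all add: pmul_assoc)

lemma psubst_sup: "finite U \<Longrightarrow> ks p \<subseteq> U \<Longrightarrow> psubst s p = (\<Sum>w\<in>U. smult (lk p w) (wsubst s w))"
  unfolding psubst_def by (rule sum_sup_zero) auto

lemma psubst_add: "psubst s (p + q) = psubst s p + psubst s q"
proof -
  let ?U = "ks p \<union> ks q"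
  show ?thesis
    by (simp add: psubst_sup[of ?U "p+q"] psubst_sup[of ?U p] psubst_sup[of ?U q] keys_add
        lookup_add smult_add_left sum.distrib)
qed
lemma psubst_zero [simp]: "psubst s 0 = 0" by (simp add: psubst_def)
lemma psubst_uminus: "psubst s (- p) = - psubst s p"
  using psubst_add[of s p "-p"] by (intro minus_unique[symmetric]) simp
lemma psubst_sum: "psubst s (\<Sum>i\<in>A. f i) = (\<Sum>i\<in>A. psubst s (f i))"
  by (induction A rule: infinite_finite_induct) (auto simp: psubst_add)
lemma psubst_sg [simp]: "psubst s (sg w c) = smult c (wsubst s w)"
  by (subst psubst_sup[of "{w}"]) auto
lemma psubst_ncmono [simp]: "psubst s (ncmono w) = wsubst s w"
  by (simp add: ncmono_def)
lemma psubst_smult: "psubst s (smult c p) = smult c (psubst s p)"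
  by (subst (1 2) pm_expand) (simp add: psubst_sum smult_sum)

lemma psubst_pmul: "psubst s (pmul p q) = pmul (psubst s p) (psubst s q)"
proof -
  have "psubst s (pmul p q) = (\<Sum>u\<in>ks p. \<Sum>v\<in>ks q. smult (lk p u * lk q v) (wsubst s (u @ v)))"
    by (simp add: pmul_def psubst_sum)
  also have "\<dots> = (\<Sum>u\<in>ks p. \<Sum>v\<in>ks q. pmul (smult (lk p u) (wsubst s u)) (smult (lk q v) (wsubst s v)))"
    by (simp add: wsubst_append pmul_smult_left pmul_smult_right mult.commute)
  also have "\<dots> = pmul (psubst s p) (psubst s q)"
    by (simp add: psubst_def pmul_sum_left pmul_sum_right) (rule sum.swap)
  finally show ?thesis .
qed

lemma FA_iff: "p \<in> FA G \<longleftrightarrow> (\<forall>w\<in>ks p. \<forall>l\<in>set w. letter_ok G l)"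
  by (simp add: FA_def)
lemma FA_sg: "(\<forall>l\<in>set w. letter_ok G l) \<Longrightarrow> sg w c \<in> FA G"
  by (simp add: FA_iff)
lemma FA_zero [simp]: "0 \<in> FA G" by (simp add: FA_iff)
lemma FA_add: "p \<in> FA G \<Longrightarrow> q \<in> FA G \<Longrightarrow> p + q \<in> FA G"
  using keys_add[of p q] by (auto simp: FA_iff)
lemma FA_uminus: "p \<in> FA G \<Longrightarrow> - p \<in> FA G"
  by (auto simp: FA_iff)
lemma FA_sum: "(\<And>i. i \<in> A \<Longrightarrow> f i \<in> FA G) \<Longrightarrow> (\<Sum>i\<in>A. f i) \<in> FA G"
  by (induction A rule: infinite_finite_induct) (auto simp: FA_add)
lemma FA_smult: "p \<in> FA G \<Longrightarrow> smult c p \<in> FA G"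
  using keys_smult[of c p] by (auto simp: FA_iff)
lemma FA_pmul: "p \<in> FA G \<Longrightarrow> q \<in> FA G \<Longrightarrow> pmul p q \<in> FA G"
  unfolding pmul_def by (intro FA_sum FA_sg) (auto simp: FA_iff)
lemma FA_pstar: "p \<in> FA G \<Longrightarrow> pstar p \<in> FA G"
  unfolding pstar_def by (intro FA_sum FA_sg) (auto simp: FA_iff wstar_def lstar_def letter_ok_def)
lemma FA_ncmono: "(\<forall>l\<in>set w. letter_ok G l) \<Longrightarrow> ncmono w \<in> FA G"
  by (simp add: ncmono_def FA_sg)

lemma FA_wsubst:
  assumes "\<forall>l\<in>set w. letter_ok G l" "endo_data G s"
  shows "wsubst s w \<in> FA G"
  using assms(1)
proof (induction w)
  case Nil then show ?case by (simp add: FA_ncmono)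
next
  case (Cons l w)
  have "lsubst s l \<in> FA G"
    using Cons.prems assms(2) by (auto simp: lsubst_def endo_data_def letter_ok_def intro: FA_pstar)
  then show ?case using Cons by (simp add: FA_pmul)
qed

lemma FA_psubst: "p \<in> FA G \<Longrightarrow> endo_data G s \<Longrightarrow> psubst s p \<in> FA G"
  unfolding psubst_def by (intro FA_sum FA_smult FA_wsubst) (auto simp: FA_iff)


context
  fixes G :: "('g, 'm) monoid_scheme"
  assumes grp: "group G" and fin: "finite (carrier G)"
begin

lemma mmul_assoc: "mmul G (mmul G A B) C = mmul G A (mmul G B C)"
  unfolding mmul_def
  by (rule ext, rule ext) (simp add: sum_distrib_left sum_distrib_right mult.assoc, rule sum.swap)

lemma mone_left: "a \<in> carrier G \<Longrightarrow> mmul G mone B a c = B a c"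
proof -
  assume a: "a \<in> carrier G"
  have "mmul G mone B a c = (\<Sum>b\<in>carrier G. if a = b then B a c else 0)"
    unfolding mmul_def mone_def by (rule sum.cong) auto
  then show ?thesis using a fin by simp
qed

lemma mone_right: "c \<in> carrier G \<Longrightarrow> mmul G B mone a c = B a c"
proof -
  assume a: "c \<in> carrier G"
  have "mmul G B mone a c = (\<Sum>b\<in>carrier G. if b = c then B a c else 0)"
    unfolding mmul_def mone_def by (rule sum.cong) auto
  then show ?thesis using a fin by simp
qed

lemma mmul_cong_right: "(\<And>b. b \<in> carrier G \<Longrightarrow> B b c = B' b c) \<Longrightarrow> mmul G A B a c = mmul G A B' a c"
  unfolding mmul_def by (rule sum.cong) auto

lemma mmul_sum_left: "mmul G (\<lambda>a c. \<Sum>i\<in>I. F i a c) B a c = (\<Sum>i\<in>I. mmul G (F i) B a c)"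
  unfolding mmul_def by (simp add: sum_distrib_right, rule sum.swap)
lemma mmul_sum_right: "mmul G B (\<lambda>a c. \<Sum>i\<in>I. F i a c) a c = (\<Sum>i\<in>I. mmul G B (F i) a c)"
  unfolding mmul_def by (simp add: sum_distrib_left, rule sum.swap)
lemma mmul_scal_left: "mmul G (\<lambda>a c. k * F a c) B a c = k * mmul G F B a c"
  unfolding mmul_def by (simp add: sum_distrib_left mult.assoc)
lemma mmul_scal_right: "mmul G B (\<lambda>a c. k * F a c) a c = k * mmul G B F a c"
  unfolding mmul_def by (simp add: sum_distrib_left algebra_simps)

lemma weval_Nil [simp]: "weval G A [] = mone" by (simp add: weval_def)
lemma weval_Cons [simp]: "weval G A (l # w) = mmul G (leval A l) (weval G A w)"
  by (simp add: weval_def)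

lemma weval_append:
  "a \<in> carrier G \<Longrightarrow> c \<in> carrier G \<Longrightarrow> weval G A (u @ v) a c = mmul G (weval G A u) (weval G A v) a c"
proof (induction u arbitrary: a)
  case Nil then show ?case by (simp add: mone_left)
next
  case (Cons l u)
  have "weval G A ((l # u) @ v) a c = mmul G (leval A l) (mmul G (weval G A u) (weval G A v)) a c"
    using Cons by simp (rule mmul_cong_right, simp)
  then show ?case by (simp add: mmul_assoc)
qed

lemma weval_single: "c \<in> carrier G \<Longrightarrow> weval G A [l] a c = leval A l a c"
  by (simp add: mone_right)

lemma peval_sup: "finite U \<Longrightarrow> ks p \<subseteq> U \<Longrightarrow>
    peval G A p a c = (\<Sum>w\<in>U. of_rat (lk p w) * weval G A w a c)"
  unfolding peval_def by (rule sum.mono_neutral_left) (auto simp: in_keys_iff)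

lemma peval_fun: "peval G A p = (\<lambda>a c. \<Sum>w\<in>ks p. of_rat (lk p w) * weval G A w a c)"
  by (simp add: peval_def)

lemma peval_add: "peval G A (p + q) a c = peval G A p a c + peval G A q a c"
proof -
  let ?U = "ks p \<union> ks q"
  show ?thesis
    by (simp add: peval_sup[of ?U "p+q"] peval_sup[of ?U p] peval_sup[of ?U q] keys_add
        lookup_add of_rat_add distrib_right sum.distrib)
qed
lemma peval_zero [simp]: "peval G A 0 a c = 0" by (simp add: peval_def)
lemma peval_uminus: "peval G A (- p) a c = - peval G A p a c"
  by (simp add: peval_def of_rat_minus sum_negf)
lemma peval_sum: "peval G A (\<Sum>i\<in>I. f i) a c = (\<Sum>i\<in>I. peval G A (f i) a c)"
  by (induction I rule: infinite_finite_induct) (auto simp: peval_add)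
lemma peval_sg: "peval G A (sg w k) a c = of_rat k * weval G A w a c"
  by (subst peval_sup[of "{w}"]) auto

lemma peval_smult: "peval G A (smult k p) a c = of_rat k * peval G A p a c"
  by (simp add: peval_sup[of "ks p" "smult k p"] keys_smult peval_def[of _ _ p] sum_distrib_left of_rat_mult mult.assoc)

lemma peval_pmul:
  assumes "a \<in> carrier G" "c \<in> carrier G"
  shows "peval G A (pmul p q) a c = mmul G (peval G A p) (peval G A q) a c"
proof -
  have "peval G A (pmul p q) a c = (\<Sum>u\<in>ks p. \<Sum>v\<in>ks q. of_rat (lk p u) * (of_rat (lk q v) * mmul G (weval G A u) (weval G A v) a c))"
    by (simp add: pmul_def peval_sum peval_sg weval_append[OF assms] of_rat_mult mult.assoc)
  also have "\<dots> = mmul G (peval G A p) (peval G A q) a c"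
    by (simp add: peval_fun mmul_sum_left mmul_sum_right mmul_scal_left mmul_scal_right)
  finally show ?thesis .
qed

lemma weval_wstar:
  "a \<in> carrier G \<Longrightarrow> c \<in> carrier G \<Longrightarrow> weval G A (wstar w) a c = weval G A w c a"
proof (induction w arbitrary: a c)
  case Nil then show ?case by (simp add: wstar_def mone_def)
next
  case (Cons l w)
  have ws: "wstar (l # w) = wstar w @ [lstar l]" by (simp add: wstar_def)
  have "weval G A (wstar (l # w)) a c = mmul G (weval G A (wstar w)) (weval G A [lstar l]) a c"
    using Cons.prems by (simp only: ws weval_append)
  also have "\<dots> = (\<Sum>b\<in>carrier G. weval G A w b a * leval A l c b)"
    unfolding mmul_def using Cons by (intro sum.cong) (auto simp: mone_right leval_def lstar_def mtrans_def)
  also have "\<dots> = weval G A (l # w) c a"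
    by (simp add: mmul_def mult.commute)
  finally show ?case .
qed

lemma peval_pstar:
  "a \<in> carrier G \<Longrightarrow> c \<in> carrier G \<Longrightarrow> peval G A (pstar p) a c = peval G A p c a"
  unfolding pstar_def[of p] by (simp add: peval_sum peval_sg weval_wstar peval_def[of _ _ p])

lemma peval_ncmono: "peval G A (ncmono w) a c = weval G A w a c"
  by (simp add: ncmono_def peval_sg)

lemma peval_wsubst:
  "a \<in> carrier G \<Longrightarrow> c \<in> carrier G \<Longrightarrow>
   peval G A (wsubst s w) a c = weval G (\<lambda>i g. peval G A (s i g)) w a c"
proof (induction w arbitrary: a)
  case Nil then show ?case by (simp add: peval_ncmono)
next
  case (Cons l w)
  have "peval G A (wsubst s (l # w)) a c = mmul G (peval G A (lsubst s l)) (peval G A (wsubst s w)) a c"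
    using Cons.prems by (simp add: peval_pmul)
  also have "\<dots> = (\<Sum>b\<in>carrier G. leval (\<lambda>i g. peval G A (s i g)) l a b * weval G (\<lambda>i g. peval G A (s i g)) w b c)"
    unfolding mmul_def using Cons
    by (intro sum.cong) (auto simp: lsubst_def leval_def mtrans_def peval_pstar)
  also have "\<dots> = weval G (\<lambda>i g. peval G A (s i g)) (l # w) a c"
    by (simp add: mmul_def)
  finally show ?case .
qed

lemma peval_psubst:
  "a \<in> carrier G \<Longrightarrow> c \<in> carrier G \<Longrightarrow>
   peval G A (psubst s p) a c = peval G (\<lambda>i g. peval G A (s i g)) p a c"
  by (simp add: psubst_def peval_sum peval_def[of _ _ p] peval_wsubst peval_smult)

lemma ldeg_carrier: "letter_ok G l \<Longrightarrow> ldeg G l \<in> carrier G"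
  using grp by (auto simp: ldeg_def letter_ok_def intro: group.inv_closed)

lemma wdeg_Cons [simp]: "wdeg G (l # w) = ldeg G l \<otimes>\<^bsub>G\<^esub> wdeg G w"
  by (simp add: wdeg_def)
lemma wdeg_Nil [simp]: "wdeg G [] = \<one>\<^bsub>G\<^esub>"
  by (simp add: wdeg_def)

lemma wdeg_carrier: "\<forall>l\<in>set w. letter_ok G l \<Longrightarrow> wdeg G w \<in> carrier G"
  using grp by (induction w) (auto intro: ldeg_carrier group.is_monoid monoid.m_closed monoid.one_closed)

lemma graded_mmul:
  assumes "h1 \<in> carrier G" "h2 \<in> carrier G" "graded_comp G h1 X" "graded_comp G h2 Y"
  shows "graded_comp G (h1 \<otimes>\<^bsub>G\<^esub> h2) (mmul G X Y)"
  unfolding graded_comp_def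
proof (intro ballI impI)
  fix a c assume ac: "a \<in> carrier G" "c \<in> carrier G" "c \<noteq> a \<otimes>\<^bsub>G\<^esub> (h1 \<otimes>\<^bsub>G\<^esub> h2)"
  have "X a b * Y b c = 0" if b: "b \<in> carrier G" for b
  proof (cases "b = a \<otimes>\<^bsub>G\<^esub> h1")
    case True
    then have "c \<noteq> b \<otimes>\<^bsub>G\<^esub> h2" using ac assms grp by (simp add: group.is_monoid monoid.m_assoc)
    then show ?thesis using assms(4) b ac by (simp add: graded_comp_def)
  next
    case False then show ?thesis using assms(3) b ac by (simp add: graded_comp_def)
  qed
  then show "mmul G X Y a c = 0" unfolding mmul_def by (intro sum.neutral) blast
qed

lemma graded_mone: "graded_comp G \<one>\<^bsub>G\<^esub> mone"
  using grp by (simp add: graded_comp_def mone_def group.is_monoid monoid.r_one)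

lemma graded_leval:
  assumes "letter_ok G l" "graded_subst G A"
  shows "graded_comp G (ldeg G l) (leval A l)"
proof (cases "snd (snd l)")
  case False then show ?thesis using assms by (simp add: ldeg_def leval_def graded_subst_def letter_ok_def)
next
  case True
  let ?g = "fst (snd l)"
  have g: "?g \<in> carrier G" "1 \<le> fst l" using assms(1) by (auto simp: letter_ok_def)
  have gr: "graded_comp G ?g (A (fst l) ?g)" using assms(2) g by (simp add: graded_subst_def)
  show ?thesis unfolding graded_comp_def
  proof (intro ballI impI)
    fix a c assume ac: "a \<in> carrier G" "c \<in> carrier G" "c \<noteq> a \<otimes>\<^bsub>G\<^esub> ldeg G l"
    have "a \<noteq> c \<otimes>\<^bsub>G\<^esub> ?g"
    proof
      assume "a = c \<otimes>\<^bsub>G\<^esub> ?g"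
      then have "a \<otimes>\<^bsub>G\<^esub> inv\<^bsub>G\<^esub> ?g = c"
        using grp g ac by (simp add: group.inv_solve_right')
      then show False using ac True by (simp add: ldeg_def)
    qed
    then show "leval A l a c = 0" using gr ac True by (simp add: leval_def mtrans_def graded_comp_def)
  qed
qed

lemma graded_weval:
  "\<forall>l\<in>set w. letter_ok G l \<Longrightarrow> graded_subst G A \<Longrightarrow> graded_comp G (wdeg G w) (weval G A w)"
  by (induction w) (auto simp: graded_mone intro!: graded_mmul graded_leval ldeg_carrier wdeg_carrier)

lemma graded_peval:
  assumes "p \<in> FA G" "homogeneous G g p" "graded_subst G A"
  shows "graded_comp G g (peval G A p)"
  unfolding graded_comp_def peval_def
proof (intro ballI impI)
  fix a c assume ac: "a \<in> carrier G" "c \<in> carrier G" "c \<noteq> a \<otimes>\<^bsub>G\<^esub> g"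
  have "weval G A w a c = 0" if "w \<in> ks p" for w
    using graded_weval[of w A] that assms ac by (auto simp: FA_iff homogeneous_def graded_comp_def)
  then show "(\<Sum>w\<in>ks p. of_rat (lk p w) * weval G A w a c) = 0" by simp
qed

lemma graded_subst_subst:
  assumes "endo_data G s" "graded_subst G A"
  shows "graded_subst G (\<lambda>i g. peval G A (s i g))"
  using assms by (auto simp: graded_subst_def endo_data_def intro: graded_peval)

lemma ids_tstar_ideal: "tstar_ideal G (graded_star_ids G)"
  unfolding tstar_ideal_def graded_star_ids_def
  by (auto simp: FA_add FA_uminus FA_pmul FA_pstar FA_psubst peval_add peval_uminus peval_pmul
      peval_pstar peval_psubst graded_subst_subst mmul_def)

end

definition lin_closed :: "'g ncpoly set \<Rightarrow> bool" where
  "lin_closed C = (0 \<in> C \<and> (\<forall>p\<in>C. \<forall>q\<in>C. p + q \<in> C) \<and> (\<forall>p\<in>C. - p \<in> C) \<and> (\<forall>p\<in>C. \<forall>c. smult c p \<in> C))"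

lemma lin_sum: "lin_closed C \<Longrightarrow> (\<And>i. i \<in> A \<Longrightarrow> f i \<in> C) \<Longrightarrow> (\<Sum>i\<in>A. f i) \<in> C"
  by (induction A rule: infinite_finite_induct) (auto simp: lin_closed_def)
lemma lin_diff: "lin_closed C \<Longrightarrow> p \<in> C \<Longrightarrow> q \<in> C \<Longrightarrow> p - q \<in> C"
  unfolding lin_closed_def by (metis diff_conv_add_uminus)
lemma lin_smult: "lin_closed C \<Longrightarrow> p \<in> C \<Longrightarrow> smult c p \<in> C"
  unfolding lin_closed_def by blast

lemma scalar_id:
  fixes t a :: rat
  shows "(\<Sum>k\<le>Suc D. (t^k - a^k) * x k) = (t - a) * (\<Sum>i\<le>D. t^i * (\<Sum>k\<in>{Suc i..Suc D}. a^(k - Suc i) * x k))"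
proof -
  have "(\<Sum>k\<le>Suc D. (t^k - a^k) * x k) = (\<Sum>k\<le>Suc D. \<Sum>i<k. (t - a) * (a^(k - Suc i) * t^i * x k))"
    by (simp add: power_diff_sumr2 sum_distrib_left sum_distrib_right mult.assoc)
  also have "\<dots> = (\<Sum>i<Suc D. \<Sum>k\<in>{Suc i..Suc D}. (t - a) * (a^(k - Suc i) * t^i * x k))"
    by (rule sum.nested_swap')
  also have "\<dots> = (t - a) * (\<Sum>i\<le>D. t^i * (\<Sum>k\<in>{Suc i..Suc D}. a^(k - Suc i) * x k))"
    by (simp add: lessThan_Suc_atMost sum_distrib_left algebra_simps)
  finally show ?thesis .
qed

lemma rat_avoid: "finite (X::rat set) \<Longrightarrow> \<exists>t. t \<notin> X"
  using ex_new_if_finite[OF infinite_UNIV_char_0] by blast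

lemma top_coeff:
  assumes lc: "lin_closed C"
  shows "finite X \<Longrightarrow> (\<And>t. t \<notin> X \<Longrightarrow> (\<Sum>k\<le>D. smult (t^k) (F k)) \<in> C) \<Longrightarrow> F D \<in> C"
proof (induction D arbitrary: F X)
  case 0
  obtain t where "t \<notin> X" using rat_avoid[OF 0(1)] by blast
  moreover have "(\<Sum>k\<le>(0::nat). smult (t^k) (F k)) = F 0" by simp
  ultimately show ?case using 0(2) by metis
next
  case (Suc D)
  obtain a where a: "a \<notin> X" using rat_avoid[OF Suc(2)] by blast
  define g where "g i = (\<Sum>k\<in>{Suc i..Suc D}. smult (a^(k - Suc i)) (F k))" for i
  have "(\<Sum>i\<le>D. smult (t^i) (g i)) \<in> C" if t: "t \<notin> insert a X" for t
  proof -
    have eq: "(\<Sum>i\<le>D. smult (t^i) (g i)) =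
      smult (1/(t-a)) ((\<Sum>k\<le>Suc D. smult (t^k) (F k)) - (\<Sum>k\<le>Suc D. smult (a^k) (F k)))"
    proof (rule poly_mapping_eqI)
      fix w
      have ta: "t - a \<noteq> 0" using t by auto
      have "(\<Sum>k\<le>Suc D. t^k * lk (F k) w) - (\<Sum>k\<le>Suc D. a^k * lk (F k) w)
           = (t - a) * (\<Sum>i\<le>D. t^i * (\<Sum>k\<in>{Suc i..Suc D}. a^(k - Suc i) * lk (F k) w))"
        using scalar_id[where D=D and t=t and a=a and x="\<lambda>k. lk (F k) w"] by (simp add: left_diff_distrib sum_subtractf)
      moreover have "lk (\<Sum>i\<le>D. smult (t^i) (g i)) w = (\<Sum>i\<le>D. t^i * (\<Sum>k\<in>{Suc i..Suc D}. a^(k - Suc i) * lk (F k) w))"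
        unfolding g_def by (simp only: lookup_sum lookup_smult)
      moreover have "lk (smult (1/(t-a)) ((\<Sum>k\<le>Suc D. smult (t^k) (F k)) - (\<Sum>k\<le>Suc D. smult (a^k) (F k)))) w
         = (1/(t-a)) * ((\<Sum>k\<le>Suc D. t^k * lk (F k) w) - (\<Sum>k\<le>Suc D. a^k * lk (F k) w))"
        by (simp only: lookup_smult lookup_minus lookup_sum)
      ultimately show "lk (\<Sum>i\<le>D. smult (t^i) (g i)) w =
        lk (smult (1/(t-a)) ((\<Sum>k\<le>Suc D. smult (t^k) (F k)) - (\<Sum>k\<le>Suc D. smult (a^k) (F k)))) w"
        using ta by simp
    qed
    show ?thesis unfolding eq
      by (intro lin_smult[OF lc] lin_diff[OF lc] Suc.prems(2)) (use t a in auto)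
  qed
  then have "g D \<in> C" using Suc.IH[where F=g and X="insert a X"] Suc.prems(1) by blast
  then show ?case by (simp add: g_def)
qed

lemma all_coeffs:
  assumes lc: "lin_closed C"
  shows "finite X \<Longrightarrow> (\<And>t. t \<notin> X \<Longrightarrow> (\<Sum>k\<le>D. smult (t^k) (F k)) \<in> C) \<Longrightarrow> k \<le> D \<Longrightarrow> F k \<in> C"
proof (induction D arbitrary: k)
  case 0 then show ?case using top_coeff[OF lc, of X F 0] by simp
next
  case (Suc D)
  have top: "F (Suc D) \<in> C" using top_coeff[OF lc, of X F "Suc D"] Suc.prems by blast
  have "(\<Sum>k\<le>D. smult (t^k) (F k)) \<in> C" if "t \<notin> X" for t
  proof -
    have "(\<Sum>k\<le>Suc D. smult (t^k) (F k)) = (\<Sum>k\<le>D. smult (t^k) (F k)) + smult (t^Suc D) (F (Suc D))"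
      by (rule sum.atMost_Suc)
    then have eq2: "(\<Sum>k\<le>D. smult (t^k) (F k)) = (\<Sum>k\<le>Suc D. smult (t^k) (F k)) - smult (t^Suc D) (F (Suc D))"
      by (simp add: algebra_simps)
    have A: "(\<Sum>k\<le>Suc D. smult (t^k) (F k)) \<in> C" using that Suc.prems(2) by blast
    have B: "smult (t^Suc D) (F (Suc D)) \<in> C" using top lin_smult[OF lc] by blast
    show ?thesis unfolding eq2 by (rule lin_diff[OF lc A B])
  qed
  then have "k \<le> D \<Longrightarrow> F k \<in> C" using Suc.IH Suc.prems(1) by blast
  then show ?case using Suc.prems(3) top le_Suc_eq by blast
qed


definition lvar :: "'g letter \<Rightarrow> nat \<times> 'g" where "lvar l = (fst l, fst (snd l))"
definition cnt :: "nat \<times> 'g \<Rightarrow> 'g letter list \<Rightarrow> nat" where "cnt v w = count_list (map lvar w) v"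
definition mdeg :: "'g letter list \<Rightarrow> (nat \<times> 'g) multiset" where "mdeg w = mset (map lvar w)"

lemma cnt_Nil [simp]: "cnt v [] = 0" by (simp add: cnt_def)
lemma cnt_Cons [simp]: "cnt v (l # w) = (if lvar l = v then Suc (cnt v w) else cnt v w)"
  by (simp add: cnt_def)
lemma cnt_le_length: "cnt v w \<le> length w" by (induction w) auto
lemma count_mdeg: "count (mdeg w) v = cnt v w" by (simp only: mdeg_def cnt_def count_mset)
lemma cnt_zero_iff: "cnt v w = 0 \<longleftrightarrow> v \<notin> lvar ` set w"
  by (induction w) auto
lemma mdeg_Cons [simp]: "mdeg (l # w) = add_mset (lvar l) (mdeg w)" by (simp add: mdeg_def)
lemma mdeg_Nil [simp]: "mdeg [] = {#}" by (simp add: mdeg_def)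

definition restr :: "('g letter list \<Rightarrow> bool) \<Rightarrow> 'g ncpoly \<Rightarrow> 'g ncpoly" where
  "restr P f = (\<Sum>w\<in>{w\<in>ks f. P w}. sg w (lk f w))"

lemma lk_restr: "lk (restr P f) u = (if P u then lk f u else 0)"
  by (auto simp: restr_def lookup_sum lk_sg in_keys_iff)
lemma keys_restr: "ks (restr P f) \<subseteq> ks f"
  by (auto simp: in_keys_iff lk_restr split: if_splits)
lemma keys_restrD: "u \<in> ks (restr P f) \<Longrightarrow> P u \<and> u \<in> ks f"
  by (auto simp: in_keys_iff lk_restr split: if_splits)
lemma restr_add: "restr P (p + q) = restr P p + restr P q"
  by (rule poly_mapping_eqI) (simp add: lk_restr lookup_add)
lemma restr_zero [simp]: "restr P 0 = 0"
  by (rule poly_mapping_eqI) (simp add: lk_restr)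
lemma restr_sum: "restr P (\<Sum>i\<in>A. f i) = (\<Sum>i\<in>A. restr P (f i))"
  by (induction A rule: infinite_finite_induct) (auto simp: restr_add)
lemma restr_smult: "restr P (smult c p) = smult c (restr P p)"
  by (rule poly_mapping_eqI) (simp add: lk_restr)
lemma restr_restr: "restr P (restr Q f) = restr (\<lambda>w. Q w \<and> P w) f"
  by (rule poly_mapping_eqI) (simp add: lk_restr)
lemma restr_True: "restr (\<lambda>_. True) f = f"
  by (rule poly_mapping_eqI) (simp add: lk_restr)
lemma restr_cong: "(\<And>w. w \<in> ks f \<Longrightarrow> P w \<longleftrightarrow> Q w) \<Longrightarrow> restr P f = restr Q f"
  by (rule poly_mapping_eqI) (auto simp: lk_restr in_keys_iff)
lemma restr_sg: "restr P (sg w c) = (if P w then sg w c else 0)"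
  by (rule poly_mapping_eqI) (simp add: lk_restr lk_sg)

lemma restr_pmul_cons: "restr P (pmul (ncmono [a]) W) = pmul (ncmono [a]) (restr (\<lambda>u. P (a # u)) W)"
proof -
  have "restr P (pmul (ncmono [a]) W) = (\<Sum>w\<in>ks W. restr P (sg (a # w) (lk W w)))"
    by (simp add: ncmono_def pmul_sg_left restr_sum)
  also have "\<dots> = (\<Sum>w\<in>ks W. sg (a # w) (if P (a # w) then lk W w else 0))"
    by (auto simp: restr_sg intro!: sum.cong)
  also have "\<dots> = pmul (ncmono [a]) (restr (\<lambda>u. P (a # u)) W)"
    by (simp add: ncmono_def pmul_sup[of "{[a]}" _ "ks W"] keys_restr lk_restr)
  finally show ?thesis .
qed

lemma decomp_mdeg: "f = (\<Sum>M\<in>mdeg ` ks f. restr (\<lambda>w. mdeg w = M) f)"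
proof (rule poly_mapping_eqI)
  fix u
  have "lk (\<Sum>M\<in>mdeg ` ks f. restr (\<lambda>w. mdeg w = M) f) u = (\<Sum>M\<in>mdeg ` ks f. if mdeg u = M then lk f u else 0)"
    by (simp add: lookup_sum lk_restr)
  also have "\<dots> = lk f u"
    by (auto simp: in_keys_iff)
  finally show "lk f u = lk (\<Sum>M\<in>mdeg ` ks f. restr (\<lambda>w. mdeg w = M) f) u" by simp
qed

lemma tstar_lin: "tstar_ideal G C \<Longrightarrow> lin_closed C"
  unfolding lin_closed_def tstar_ideal_def smult_def
  by (auto simp: FA_sg)

lemma tstar_sum: "tstar_ideal G C \<Longrightarrow> (\<And>i. i \<in> A \<Longrightarrow> f i \<in> C) \<Longrightarrow> (\<Sum>i\<in>A. f i) \<in> C"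
  by (rule lin_sum[OF tstar_lin])

definition xv :: "nat \<Rightarrow> 'g \<Rightarrow> 'g ncpoly" where "xv i g = ncmono [(i, g, False)]"

lemma pstar_xv: "pstar (xv i g) = ncmono [(i, g, True)]"
  by (simp add: xv_def lstar_def)

lemma pmul_ncmono: "pmul (ncmono u) (ncmono w) = ncmono (u @ w)"
  by (simp add: ncmono_def pmul_sg)

lemma letter_eq: "(fst l, fst (snd l), snd (snd l)) = l" by simp

definition scal :: "nat \<times> 'g \<Rightarrow> rat \<Rightarrow> nat \<Rightarrow> 'g \<Rightarrow> 'g ncpoly" where
  "scal v t = (\<lambda>i g. if (i, g) = v then smult t (xv i g) else xv i g)"

lemma lsubst_scal: "lsubst (scal v t) l = smult (if lvar l = v then t else 1) (ncmono [l])"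
  by (cases l) (auto simp: lsubst_def scal_def lvar_def pstar_smult pstar_xv xv_def lstar_def)

lemma wsubst_scal: "wsubst (scal v t) w = smult (t ^ cnt v w) (ncmono w)"
  by (induction w) (auto simp: lsubst_scal pmul_smult_left pmul_smult_right pmul_ncmono mult.commute)

lemma sum_if_eq: "finite A \<Longrightarrow> (\<Sum>k\<in>A. f k * (if m = k then c else 0)) = (if m \<in> A then f m * c else (0::'a::comm_semiring_1))"
proof -
  assume A: "finite A"
  have "(\<Sum>k\<in>A. f k * (if m = k then c else 0)) = (\<Sum>k\<in>A. if k = m then f m * c else 0)"
    by (rule sum.cong) auto
  then show ?thesis using A by simp
qed

lemma psubst_scal:
  assumes "\<forall>w\<in>ks f. length w \<le> D"
  shows "psubst (scal v t) f = (\<Sum>k\<le>D. smult (t^k) (restr (\<lambda>w. cnt v w = k) f))"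
proof (rule poly_mapping_eqI)
  fix u
  have "lk (psubst (scal v t) f) u = (\<Sum>w\<in>ks f. if w = u then lk f w * t ^ cnt v w else 0)"
    by (simp add: psubst_def lookup_sum wsubst_scal ncmono_def lk_sg)
  also have "\<dots> = lk f u * t ^ cnt v u"
    by (auto simp: in_keys_iff)
  also have "\<dots> = (\<Sum>k\<le>D. t^k * (if cnt v u = k then lk f u else 0))"
  proof (cases "u \<in> ks f")
    case True
    then have "cnt v u \<le> D" using assms cnt_le_length[of v u] by fastforce
    then show ?thesis by (simp add: sum_if_eq)
  next
    case False then show ?thesis by (simp add: in_keys_iff sum_if_eq)
  qed
  also have "\<dots> = lk (\<Sum>k\<le>D. smult (t^k) (restr (\<lambda>w. cnt v w = k) f)) u"
    by (simp add: lookup_sum lk_restr)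
  finally show "lk (psubst (scal v t) f) u = lk (\<Sum>k\<le>D. smult (t^k) (restr (\<lambda>w. cnt v w = k) f)) u" .
qed

context
  fixes G :: "('g, 'm) monoid_scheme"
  assumes grp: "group G"
begin

lemma xv_FA_hom: "1 \<le> i \<Longrightarrow> g \<in> carrier G \<Longrightarrow> xv i g \<in> FA G \<and> homogeneous G g (xv i g)"
  using grp by (auto simp: xv_def ncmono_def FA_iff letter_ok_def homogeneous_def wdeg_def ldeg_def
      group.is_monoid monoid.r_one)

lemma homogeneous_smult: "homogeneous G g p \<Longrightarrow> homogeneous G g (smult c p)"
  using keys_smult by (fastforce simp: homogeneous_def)

lemma homogeneous_add: "homogeneous G g p \<Longrightarrow> homogeneous G g q \<Longrightarrow> homogeneous G g (p + q)"
  using keys_add by (fastforce simp: homogeneous_def)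

lemma endo_scal: "endo_data G (scal v t)"
  unfolding endo_data_def scal_def
  using xv_FA_hom by (auto intro: FA_smult homogeneous_smult)

lemma restr_cnt_in:
  assumes C: "tstar_ideal G C" and f: "f \<in> C"
  shows "restr (\<lambda>w. cnt v w = k) f \<in> C"
proof -
  define D where "D = (\<Sum>w\<in>ks f. length w)"
  have len: "\<forall>w\<in>ks f. length w \<le> D"
    unfolding D_def by (auto intro: member_le_sum)
  have P: "(\<Sum>k\<le>D. smult (t^k) (restr (\<lambda>w. cnt v w = k) f)) \<in> C" for t
  proof -
    have "psubst (scal v t) f \<in> C" using C f endo_scal unfolding tstar_ideal_def by blast
    then show ?thesis by (simp add: psubst_scal[OF len])
  qed
  show ?thesis
  proof (cases "k \<le> D")
    case True
    then show ?thesis using all_coeffs[OF tstar_lin[OF C], of "{}" "\<lambda>k. restr (\<lambda>w. cnt v w = k) f" D k] P by simp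
  next
    case False
    have "restr (\<lambda>w. cnt v w = k) f = 0"
    proof (rule poly_mapping_eqI)
      fix u show "lk (restr (\<lambda>w. cnt v w = k) f) u = lk 0 u"
        using len False cnt_le_length[of v u] by (auto simp: lk_restr) (meson in_keys_iff le_trans)
    qed
    then show ?thesis using C by (simp add: tstar_ideal_def)
  qed
qed

lemma restr_mdeg_in:
  assumes C: "tstar_ideal G C" and f: "f \<in> C"
  shows "restr (\<lambda>w. mdeg w = M) f \<in> C"
proof -
  define V where "V = lvar ` (\<Union>w\<in>ks f. set w) \<union> set_mset M"
  have finV: "finite V" by (simp add: V_def)
  have gen: "finite V' \<Longrightarrow> restr (\<lambda>w. \<forall>v\<in>V'. cnt v w = count M v) f \<in> C" for V'
  proof (induction V' rule: finite_induct)
    case empty then show ?case using f by (simp add: restr_True)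
  next
    case (insert v V')
    have "restr (\<lambda>w. \<forall>u\<in>insert v V'. cnt u w = count M u) f
        = restr (\<lambda>w. cnt v w = count M v) (restr (\<lambda>w. \<forall>u\<in>V'. cnt u w = count M u) f)"
      by (simp add: restr_restr conj_commute)
    then show ?case using restr_cnt_in[OF C insert.IH] by simp
  qed
  have "restr (\<lambda>w. \<forall>v\<in>V. cnt v w = count M v) f = restr (\<lambda>w. mdeg w = M) f"
  proof (rule restr_cong)
    fix w assume w: "w \<in> ks f"
    show "(\<forall>v\<in>V. cnt v w = count M v) \<longleftrightarrow> mdeg w = M"
    proof
      assume h: "\<forall>v\<in>V. cnt v w = count M v"
      show "mdeg w = M"
      proof (rule multiset_eqI)
        fix v show "count (mdeg w) v = count M v"
        proof (cases "v \<in> V")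
          case True then show ?thesis using h by (simp add: count_mdeg)
        next
          case False
          then have "v \<notin> lvar ` set w" "v \<notin># M" using w by (auto simp: V_def)
          then have "cnt v w = 0" "count M v = 0" by (auto simp: cnt_zero_iff not_in_iff)
          then show ?thesis by (simp add: count_mdeg)
        qed
      qed
    qed (auto simp: count_mdeg[symmetric])
  qed
  then show ?thesis using gen[OF finV] by simp
qed

end

definition lin :: "nat \<times> 'g \<Rightarrow> nat \<Rightarrow> nat \<Rightarrow> 'g \<Rightarrow> 'g ncpoly" where
  "lin v iy = (\<lambda>i g. if (i, g) = v then xv i g + xv iy g else xv i g)"
definition ren :: "nat \<Rightarrow> 'g letter \<Rightarrow> 'g letter" where
  "ren iy l = (iy, fst (snd l), snd (snd l))"
definition bck :: "nat \<times> 'g \<Rightarrow> nat \<Rightarrow> nat \<Rightarrow> 'g \<Rightarrow> 'g ncpoly" where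
  "bck v iy = (\<lambda>i g. if i = iy \<and> g = snd v then xv (fst v) g else xv i g)"

fun Ex1 :: "nat \<times> 'g \<Rightarrow> nat \<Rightarrow> 'g letter list \<Rightarrow> 'g ncpoly" where
  "Ex1 v iy [] = 0"
| "Ex1 v iy (l # w) = pmul (ncmono [l]) (Ex1 v iy w) + (if lvar l = v then ncmono (ren iy l # w) else 0)"

lemma lsubst_lin: "lsubst (lin v iy) l = ncmono [l] + (if lvar l = v then ncmono [ren iy l] else 0)"
  by (cases l) (auto simp: lsubst_def lin_def lvar_def pstar_add pstar_xv xv_def lstar_def ren_def)

lemma restr_False: "restr (\<lambda>_. False) f = 0"
  by (rule poly_mapping_eqI) (simp add: lk_restr)

lemma lvar_ren: "lvar l = v \<Longrightarrow> lvar (ren iy l) = (iy, snd v)"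
  by (auto simp: lvar_def ren_def)

lemma restr_lin:
  assumes "\<forall>l\<in>set w. lvar l \<noteq> (iy, snd v)"
  shows "restr (\<lambda>u. cnt (iy, snd v) u = 0) (wsubst (lin v iy) w) = ncmono w \<and>
         restr (\<lambda>u. cnt (iy, snd v) u = 1) (wsubst (lin v iy) w) = Ex1 v iy w"
  using assms
proof (induction w)
  case Nil
  show ?case by (simp add: ncmono_def restr_sg)
next
  case (Cons l w)
  let ?y = "(iy, snd v)"
  have ly: "lvar l \<noteq> ?y" using Cons.prems by auto
  have IH: "restr (\<lambda>u. cnt ?y u = 0) (wsubst (lin v iy) w) = ncmono w"
    "restr (\<lambda>u. cnt ?y u = 1) (wsubst (lin v iy) w) = Ex1 v iy w"
    using Cons by auto
  have eq: "wsubst (lin v iy) (l # w) = pmul (ncmono [l]) (wsubst (lin v iy) w) +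
     (if lvar l = v then pmul (ncmono [ren iy l]) (wsubst (lin v iy) w) else 0)"
    by (simp add: lsubst_lin pmul_add_left)
  show ?case
  proof (cases "lvar l = v")
    case True
    have ry: "lvar (ren iy l) = ?y" using lvar_ren[OF True] .
    show ?thesis using ly ry IH
      by (simp add: eq True restr_add restr_pmul_cons restr_False pmul_ncmono del: wsubst_Cons)
  next
    case False
    show ?thesis using ly IH
      by (simp add: eq False restr_add restr_pmul_cons pmul_ncmono del: wsubst_Cons)
  qed
qed

lemma lsubst_bck:
  "lsubst (bck v iy) l = ncmono [if lvar l = (iy, snd v) then (fst v, fst (snd l), snd (snd l)) else l]"
  by (cases l) (auto simp: lsubst_def bck_def lvar_def pstar_xv xv_def lstar_def)

lemma wsubst_bck: "\<forall>l\<in>set w. lvar l \<noteq> (iy, snd v) \<Longrightarrow> wsubst (bck v iy) w = ncmono w"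
  by (induction w) (auto simp: lsubst_bck pmul_ncmono)

lemma psubst_bck_Ex1:
  assumes "\<forall>l\<in>set w. lvar l \<noteq> (iy, snd v)"
  shows "psubst (bck v iy) (Ex1 v iy w) = smult (of_nat (cnt v w)) (ncmono w)"
  using assms
proof (induction w)
  case Nil then show ?case by simp
next
  case (Cons l w)
  have ly: "lvar l \<noteq> (iy, snd v)" using Cons.prems by auto
  have a: "psubst (bck v iy) (pmul (ncmono [l]) (Ex1 v iy w)) = smult (of_nat (cnt v w)) (ncmono (l # w))"
    using Cons ly by (simp add: psubst_pmul wsubst_bck pmul_smult_right pmul_ncmono lsubst_bck)
  show ?case
  proof (cases "lvar l = v")
    case True
    have r: "lvar (ren iy l) = (iy, snd v)" using lvar_ren[OF True] .
    have l': "(fst v, snd (ren iy l)) = l"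
      using True by (cases l) (auto simp: ren_def lvar_def)
    have b: "pmul (lsubst (bck v iy) (ren iy l)) (wsubst (bck v iy) w) = ncmono (l # w)"
      using Cons.prems by (simp add: lsubst_bck r l' wsubst_bck pmul_ncmono)
    show ?thesis using True by (simp add: psubst_add a b smult_add_left add.commute)
  next
    case False then show ?thesis using a by (simp add: psubst_add)
  qed
qed

lemma keys_pmul_cons: "ks (pmul (ncmono [l]) X) \<subseteq> (\<lambda>u. l # u) ` ks X"
proof -
  have "ks (pmul (ncmono [l]) X) \<subseteq> (\<Union>u\<in>ks X. ks (sg (l # u) (lk X u)))"
    unfolding ncmono_def pmul_sg_left by (rule order_trans[OF keys_sum]) simp
  then show ?thesis by (auto split: if_splits)
qed

lemma keys_Ex1:
  "u \<in> ks (Ex1 v iy w) \<Longrightarrow> add_mset v (mdeg u) = add_mset (iy, snd v) (mdeg w)"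
proof (induction w arbitrary: u)
  case Nil then show ?case by simp
next
  case (Cons l w)
  have "u \<in> ks (pmul (ncmono [l]) (Ex1 v iy w)) \<or> (lvar l = v \<and> u = ren iy l # w)"
  proof -
    have "u \<in> ks (pmul (ncmono [l]) (Ex1 v iy w)) \<union> ks (if lvar l = v then ncmono (ren iy l # w) else 0)"
      using Cons.prems by (intro subsetD[OF keys_add]) simp
    then show ?thesis by (auto simp: ncmono_def split: if_splits)
  qed
  then show ?case
  proof
    assume "u \<in> ks (pmul (ncmono [l]) (Ex1 v iy w))"
    then obtain u' where "u = l # u'" "u' \<in> ks (Ex1 v iy w)" using keys_pmul_cons by blast
    then show ?thesis using Cons.IH by (simp add: add_mset_commute)
  next
    assume "lvar l = v \<and> u = ren iy l # w"
    then show ?thesis using lvar_ren[of l v iy] by (simp add: add_mset_commute)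
  qed
qed

lemma card_le_size: "card (set_mset M) \<le> size M"
  by (induction M) (auto simp: card_insert_if)

context
  fixes G :: "('g, 'm) monoid_scheme"
  assumes grp: "group G"
begin

lemma endo_lin: "1 \<le> iy \<Longrightarrow> endo_data G (lin v iy)"
  unfolding endo_data_def lin_def
  using xv_FA_hom[OF grp] by (auto intro: FA_add homogeneous_add[OF grp])

lemma endo_back: "1 \<le> fst v \<Longrightarrow> endo_data G (bck v iy)"
  unfolding endo_data_def bck_def
  using xv_FA_hom[OF grp] by auto

lemma linearize:
  assumes C: "tstar_ideal G C" and f: "f \<in> C"
    and iy: "1 \<le> iy" and fresh: "\<forall>w\<in>ks f. \<forall>l\<in>set w. lvar l \<noteq> (iy, snd v)"
  shows "(\<Sum>w\<in>ks f. smult (lk f w) (Ex1 v iy w)) \<in> C"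
proof -
  have "psubst (lin v iy) f \<in> C" using C f endo_lin[OF iy] by (auto simp: tstar_ideal_def)
  then have "restr (\<lambda>u. cnt (iy, snd v) u = 1) (psubst (lin v iy) f) \<in> C"
    by (rule restr_cnt_in[OF grp C])
  moreover have "restr (\<lambda>u. cnt (iy, snd v) u = 1) (psubst (lin v iy) f) = (\<Sum>w\<in>ks f. smult (lk f w) (Ex1 v iy w))"
    unfolding psubst_def restr_sum restr_smult
  proof (intro sum.cong refl)
    fix x assume "x \<in> ks f"
    then show "smult (lk f x) (restr (\<lambda>u. cnt (iy, snd v) u = 1) (wsubst (lin v iy) x)) = smult (lk f x) (Ex1 v iy x)"
      using restr_lin[of x iy v] fresh by auto
  qed
  ultimately show ?thesis by simp
qed

lemma restitute:
  assumes C: "tstar_ideal G C" and v: "1 \<le> fst v"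
    and fresh: "\<forall>w\<in>ks f. \<forall>l\<in>set w. lvar l \<noteq> (iy, snd v)"
    and hom: "\<forall>w\<in>ks f. cnt v w = d" and d: "d \<noteq> 0"
    and F1: "(\<Sum>w\<in>ks f. smult (lk f w) (Ex1 v iy w)) \<in> C"
  shows "f \<in> C"
proof -
  have "psubst (bck v iy) (\<Sum>w\<in>ks f. smult (lk f w) (Ex1 v iy w)) \<in> C"
    using C F1 endo_back[OF v] by (auto simp: tstar_ideal_def)
  moreover have "psubst (bck v iy) (\<Sum>w\<in>ks f. smult (lk f w) (Ex1 v iy w)) = smult (of_nat d) f"
  proof -
    have "psubst (bck v iy) (\<Sum>w\<in>ks f. smult (lk f w) (Ex1 v iy w)) = (\<Sum>w\<in>ks f. smult (of_nat d) (sg w (lk f w)))"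
      unfolding psubst_sum using fresh hom by (intro sum.cong) (auto simp: psubst_smult psubst_bck_Ex1 ncmono_def mult.commute)
    also have "\<dots> = smult (of_nat d) f"
      by (simp only: smult_sum[symmetric] pm_expand[of f, symmetric])
    finally show ?thesis .
  qed
  ultimately have "smult (of_nat d) f \<in> C" by simp
  then have "smult (1 / of_nat d) (smult (of_nat d) f) \<in> C"
    using lin_smult[OF tstar_lin[OF C]] by blast
  then show ?thesis using d by simp
qed

end

lemma length_Wact: "length (Wact_mono n \<sigma> \<pi> \<gamma>) = n"
  by (simp add: Wact_mono_def)

lemma nth_Wact: "p < n \<Longrightarrow> Wact_mono n \<sigma> \<pi> \<gamma> ! p = (\<pi> (Suc p), \<sigma> (\<pi> (Suc p)), \<gamma> (\<pi> (Suc p)))"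
  by (simp add: Wact_mono_def nth_upt del: upt_Suc)

lemma word_perm:
  assumes len: "length u = n" and dist: "distinct (map fst u)" and st: "set (map fst u) = {1..n}"
    and sig: "\<forall>p<n. fst (snd (u ! p)) = \<sigma> (fst (u ! p))"
  shows "\<exists>\<pi> \<gamma>. \<pi> permutes {1..n} \<and> (\<forall>j. \<gamma> j \<longrightarrow> j \<in> {1..n}) \<and> u = Wact_mono n \<sigma> \<pi> \<gamma>"
proof -
  define \<pi> where "\<pi> j = (if j \<in> {1..n} then fst (u ! (j - 1)) else j)" for j
  define \<gamma> where "\<gamma> i = (\<exists>p<n. fst (u ! p) = i \<and> snd (snd (u ! p)))" for i
  have inu: "p < n \<Longrightarrow> fst (u ! p) \<in> {1..n}" for p
  proof -
    assume p: "p < n"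
    have "map fst u ! p \<in> set (map fst u)" using p len by (intro nth_mem) simp
    then have "fst (u ! p) \<in> set (map fst u)" using p len by simp
    then show ?thesis unfolding st .
  qed
  have injp: "p < n \<Longrightarrow> q < n \<Longrightarrow> fst (u ! p) = fst (u ! q) \<Longrightarrow> p = q" for p q
  proof -
    assume pq: "p < n" "q < n" "fst (u ! p) = fst (u ! q)"
    then have "map fst u ! p = map fst u ! q" using len by simp
    then show "p = q" using nth_eq_iff_index_eq[OF dist] pq len by simp
  qed
  have inj: "inj_on \<pi> {1..n}"
  proof (rule inj_onI)
    fix j j' assume "j \<in> {1..n}" "j' \<in> {1..n}" "\<pi> j = \<pi> j'"
    then have "j - 1 = j' - 1" using injp[of "j - 1" "j' - 1"] by (auto simp: \<pi>_def)
    then show "j = j'" using \<open>j \<in> {1..n}\<close> \<open>j' \<in> {1..n}\<close> by auto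
  qed
  have img: "\<pi> ` {1..n} \<subseteq> {1..n}"
    using inu by (auto simp: \<pi>_def)
  have "\<pi> ` {1..n} = {1..n}" by (rule endo_inj_surj[OF _ img inj]) simp
  then have bij: "bij_betw \<pi> {1..n} {1..n}" using inj by (simp add: bij_betw_def)
  have perm: "\<pi> permutes {1..n}"
    by (rule bij_imp_permutes[OF bij]) (auto simp: \<pi>_def)
  have gam: "\<forall>j. \<gamma> j \<longrightarrow> j \<in> {1..n}"
    using inu by (auto simp: \<gamma>_def)
  have "u = Wact_mono n \<sigma> \<pi> \<gamma>"
  proof (rule nth_equalityI)
    show "length u = length (Wact_mono n \<sigma> \<pi> \<gamma>)" by (simp add: length_Wact len)
  next
    fix p assume "p < length u"
    then have p: "p < n" using len by simp
    have pi: "\<pi> (Suc p) = fst (u ! p)" using p by (simp add: \<pi>_def)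
    have ga: "\<gamma> (fst (u ! p)) = snd (snd (u ! p))"
      using injp p by (auto simp: \<gamma>_def)
    show "u ! p = Wact_mono n \<sigma> \<pi> \<gamma> ! p"
      using p by (simp add: nth_Wact pi ga sig[rule_format, OF p, symmetric])
  qed
  then show ?thesis using perm gam by blast
qed

lemma Gamma_finite: "finite {\<gamma>::nat \<Rightarrow> bool. \<forall>j. \<gamma> j \<longrightarrow> j \<in> {1..n}}"
proof (rule finite_subset)
  show "{\<gamma>::nat \<Rightarrow> bool. \<forall>j. \<gamma> j \<longrightarrow> j \<in> {1..n}} \<subseteq> (\<lambda>S j. j \<in> S) ` Pow {1..n}"
  proof
    fix \<gamma> :: "nat \<Rightarrow> bool" assume "\<gamma> \<in> {\<gamma>. \<forall>j. \<gamma> j \<longrightarrow> j \<in> {1..n}}"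
    then have "{j. \<gamma> j} \<in> Pow {1..n}" "\<gamma> = (\<lambda>j. j \<in> {j. \<gamma> j})" by auto
    then show "\<gamma> \<in> (\<lambda>S j. j \<in> S) ` Pow {1..n}" by blast
  qed
qed simp

lemma Wact_inj:
  assumes "\<pi> permutes {1..n}" "\<pi>' permutes {1..n}" "\<forall>j. \<gamma> j \<longrightarrow> j \<in> {1..n}" "\<forall>j. \<gamma>' j \<longrightarrow> j \<in> {1..n}"
    and eq: "Wact_mono n \<sigma> \<pi> \<gamma> = Wact_mono n \<sigma> \<pi>' \<gamma>'"
  shows "\<pi> = \<pi>' \<and> \<gamma> = \<gamma>'"
proof -
  have A: "j \<in> {1..n} \<Longrightarrow> \<pi> j = \<pi>' j \<and> \<gamma> (\<pi> j) = \<gamma>' (\<pi>' j)" for j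
  proof -
    assume j: "j \<in> {1..n}"
    then have jn: "j - 1 < n" and js: "Suc (j - 1) = j" by auto
    have e: "Wact_mono n \<sigma> \<pi> \<gamma> ! (j - 1) = Wact_mono n \<sigma> \<pi>' \<gamma>' ! (j - 1)" using eq by simp
    have e1: "Wact_mono n \<sigma> \<pi> \<gamma> ! (j - 1) = (\<pi> j, \<sigma> (\<pi> j), \<gamma> (\<pi> j))"
      using nth_Wact[OF jn, of \<sigma> \<pi> \<gamma>] unfolding js .
    have e2: "Wact_mono n \<sigma> \<pi>' \<gamma>' ! (j - 1) = (\<pi>' j, \<sigma> (\<pi>' j), \<gamma>' (\<pi>' j))"
      using nth_Wact[OF jn, of \<sigma> \<pi>' \<gamma>'] unfolding js .
    have "(\<pi> j, \<sigma> (\<pi> j), \<gamma> (\<pi> j)) = (\<pi>' j, \<sigma> (\<pi>' j), \<gamma>' (\<pi>' j))" using e unfolding e1 e2 .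
    then show ?thesis by (metis prod.inject)
  qed
  have pe: "\<pi> = \<pi>'"
  proof
    fix j show "\<pi> j = \<pi>' j"
    proof (cases "j \<in> {1..n}")
      case True then show ?thesis using A by blast
    next
      case False then show ?thesis using permutes_not_in[OF assms(1)] permutes_not_in[OF assms(2)] by metis
    qed
  qed
  have ga: "\<gamma> i = \<gamma>' i" for i
  proof (cases "i \<in> {1..n}")
    case True
    have "i \<in> \<pi> ` {1..n}" using True permutes_image[OF assms(1)] by simp
    then obtain j where j: "j \<in> {1..n}" "\<pi> j = i" by (rule imageE) simp
    have "\<gamma> (\<pi> j) = \<gamma>' (\<pi>' j)" using A[OF j(1)] by blast
    then show ?thesis using j(2) pe by simp
  next
    case False
    then have "\<not> \<gamma> i" "\<not> \<gamma>' i" using assms(3,4) by blast+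
    then show ?thesis by simp
  qed
  have "\<gamma> = \<gamma>'" by (rule ext) (rule ga)
  then show ?thesis using pe by blast
qed

lemma wsum_repr:
  assumes keys: "\<forall>u\<in>ks h. \<exists>\<pi> \<gamma>. \<pi> permutes {1..n} \<and> (\<forall>j. \<gamma> j \<longrightarrow> j \<in> {1..n}) \<and> u = Wact_mono n \<sigma> \<pi> \<gamma>"
  shows "h = Wsum n \<sigma> (\<lambda>\<pi> \<gamma>. lk h (Wact_mono n \<sigma> \<pi> \<gamma>))"
proof -
  let ?P = "{\<pi>. \<pi> permutes {1..n}}"
  let ?Q = "{\<gamma>::nat \<Rightarrow> bool. \<forall>j. \<gamma> j \<longrightarrow> j \<in> {1..n}}"
  let ?W = "\<lambda>x. Wact_mono n \<sigma> (fst x) (snd x)"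
  have fin: "finite (?P \<times> ?Q)" using finite_permutations[of "{1..n}"] Gamma_finite[of n] by simp
  have inj: "inj_on ?W (?P \<times> ?Q)"
  proof (rule inj_onI)
    fix x y assume "x \<in> ?P \<times> ?Q" "y \<in> ?P \<times> ?Q" "?W x = ?W y"
    then show "x = y"
      using Wact_inj[where \<pi>="fst x" and \<pi>'="fst y" and \<gamma>="snd x" and \<gamma>'="snd y" and n=n and \<sigma>=\<sigma>]
      by (auto simp: prod_eq_iff)
  qed
  have "Wsum n \<sigma> (\<lambda>\<pi> \<gamma>. lk h (Wact_mono n \<sigma> \<pi> \<gamma>)) = (\<Sum>x\<in>?P \<times> ?Q. sg (?W x) (lk h (?W x)))"
    unfolding Wsum_def sum.cartesian_product by (simp add: ncmono_def split_beta)
  also have "\<dots> = (\<Sum>u\<in>?W ` (?P \<times> ?Q). sg u (lk h u))"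
    by (rule sum.reindex[OF inj, symmetric, unfolded comp_def])
  also have "\<dots> = h"
  proof (rule pm_expand_sup[symmetric])
    show "finite (?W ` (?P \<times> ?Q))" using fin by (rule finite_imageI)
    show "ks h \<subseteq> ?W ` (?P \<times> ?Q)"
    proof
      fix u assume "u \<in> ks h"
      then obtain \<pi> \<gamma> where "\<pi> permutes {1..n}" "\<forall>j. \<gamma> j \<longrightarrow> j \<in> {1..n}" "u = Wact_mono n \<sigma> \<pi> \<gamma>"
        using keys by blast
      then show "u \<in> ?W ` (?P \<times> ?Q)" by (intro image_eqI[of _ _ "(\<pi>, \<gamma>)"]) auto
    qed
  qed
  finally show ?thesis by simp
qed


fun lidx :: "'a list \<Rightarrow> 'a \<Rightarrow> nat" where
  "lidx [] x = 0"
| "lidx (y # ys) x = (if y = x then 0 else Suc (lidx ys x))"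

lemma lidx_less: "x \<in> set xs \<Longrightarrow> lidx xs x < length xs"
  by (induction xs) auto
lemma nth_lidx: "x \<in> set xs \<Longrightarrow> xs ! lidx xs x = x"
  by (induction xs) auto
lemma lidx_nth: "distinct xs \<Longrightarrow> k < length xs \<Longrightarrow> lidx xs (xs ! k) = k"
proof (induction xs arbitrary: k)
  case Nil then show ?case by simp
next
  case (Cons y ys) then show ?case by (cases k) auto
qed

lemma lidx_image: "distinct xs \<Longrightarrow> lidx xs ` set xs = {..<length xs}"
proof
  show "lidx xs ` set xs \<subseteq> {..<length xs}" using lidx_less by auto
  show "distinct xs \<Longrightarrow> {..<length xs} \<subseteq> lidx xs ` set xs"
  proof
    fix k assume "distinct xs" "k \<in> {..<length xs}"
    then have "lidx xs (xs ! k) = k" "xs ! k \<in> set xs" using lidx_nth by auto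
    then show "k \<in> lidx xs ` set xs" by (metis imageI)
  qed
qed

lemma lidx_inj: "inj_on (lidx xs) (set xs)"
  by (rule inj_onI) (metis nth_lidx)

lemma count_le1_distinct: "(\<forall>x. count (mset xs) x \<le> 1) \<Longrightarrow> distinct xs"
proof (induction xs)
  case Nil then show ?case by simp
next
  case (Cons a xs)
  have "count (mset (a # xs)) a \<le> 1" using Cons.prems by blast
  then have "a \<notin> set xs" by simp
  moreover have "\<forall>x. count (mset xs) x \<le> 1"
  proof
    fix x show "count (mset xs) x \<le> 1" using Cons.prems[rule_format, of x] \<open>a \<notin> set xs\<close>
      by (cases "x = a") (auto simp: count_mset count_list_0_iff)
  qed
  ultimately show ?case using Cons.IH by simp
qed

lemma wsubst_map: "(\<And>l. lsubst s l = ncmono [h l]) \<Longrightarrow> wsubst s w = ncmono (map h w)"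
  by (induction w) (auto simp: pmul_ncmono)

lemma psubst_map: "(\<And>l. lsubst s l = ncmono [h l]) \<Longrightarrow> psubst s f = (\<Sum>w\<in>ks f. sg (map h w) (lk f w))"
  by (simp add: psubst_def wsubst_map ncmono_def)

context
  fixes G :: "('g, 'm) monoid_scheme"
  assumes grp: "group G" and fin: "finite (carrier G)"
begin

abbreviation SS where
  "SS \<equiv> {f \<in> graded_star_ids G. \<exists>n \<sigma> a. 1 \<le> n \<and>
              (\<forall>j\<in>{1..n}. \<sigma> j \<in> carrier G) \<and> f = Wsum n \<sigma> a}"

lemma const_identity:
  assumes f: "f \<in> graded_star_ids G" and k: "ks f \<subseteq> {[]}"
  shows "f = 0"
proof -
  let ?A = "\<lambda>(i::nat) (g::'g) (a::'g) (c::'g). (0::complex)"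
  have gs: "graded_subst G ?A" by (simp add: graded_subst_def graded_comp_def)
  have one: "\<one>\<^bsub>G\<^esub> \<in> carrier G" using grp by (simp add: group.is_monoid monoid.one_closed)
  have "peval G ?A f \<one>\<^bsub>G\<^esub> \<one>\<^bsub>G\<^esub> = 0" using f gs one by (auto simp: graded_star_ids_def)
  moreover have "peval G ?A f \<one>\<^bsub>G\<^esub> \<one>\<^bsub>G\<^esub> = of_rat (lk f [])"
    by (subst peval_sup[OF grp fin, of "{[]}"]) (use k in \<open>auto simp: mone_def weval_def\<close>)
  ultimately have "lk f [] = 0" by simp
  then show ?thesis using k by (intro poly_mapping_eqI) (auto simp: in_keys_iff)
qed

lemma base_case:
  assumes I: "tstar_ideal G I" and SI: "SS \<subseteq> I"
    and f: "f \<in> graded_star_ids G" and hom: "\<forall>w\<in>ks f. mdeg w = M" and dist: "\<forall>v. count M v \<le> 1"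
  shows "f \<in> I"
proof (cases "f = 0")
  case True then show ?thesis using I by (simp add: tstar_ideal_def)
next
  case False
  then obtain w0 where w0: "w0 \<in> ks f" by fastforce
  have fFA: "f \<in> FA G" using f by (simp add: graded_star_ids_def)
  define vs where "vs = map lvar w0"
  define n where "n = length vs"
  have Mvs: "M = mset vs" using hom w0 by (simp add: vs_def mdeg_def)
  have dvs: "distinct vs" using dist Mvs count_le1_distinct by blast
  have wprops: "distinct (map lvar w) \<and> set (map lvar w) = set vs \<and> length w = n" if "w \<in> ks f" for w
  proof -
    have m: "mset (map lvar w) = mset vs" using hom that Mvs by (simp add: mdeg_def)
    then show ?thesis using dist count_le1_distinct[of "map lvar w"] mset_eq_setD[OF m] mset_eq_length[OF m]
      by (auto simp: Mvs n_def)
  qed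
  have vsok: "1 \<le> fst x \<and> snd x \<in> carrier G" if "x \<in> set vs" for x
  proof -
    have "x \<in> lvar ` set w0" using that by (simp add: vs_def)
    then obtain l where l: "l \<in> set w0" "x = lvar l" by blast
    have "letter_ok G l" using fFA w0 l(1) by (auto simp: FA_iff)
    then show ?thesis using l(2) by (simp add: letter_ok_def lvar_def)
  qed
  show ?thesis
  proof (cases "n = 0")
    case True
    then have "ks f \<subseteq> {[]}" using wprops by auto
    then show ?thesis using const_identity[OF f] False by simp
  next
    case False
    then have n1: "1 \<le> n" by simp
    define rn :: "'g letter \<Rightarrow> 'g letter" where "rn l = (Suc (lidx vs (lvar l)), fst (snd l), snd (snd l))" for l
    define \<rho> where "\<rho> i g = xv (Suc (lidx vs (i, g))) g" for i :: nat and g :: 'g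
    define rn' :: "'g letter \<Rightarrow> 'g letter" where
      "rn' l = (if 1 \<le> fst l \<and> fst l \<le> n then (fst (vs ! (fst l - 1)), fst (snd l), snd (snd l)) else l)" for l
    define \<rho>' where "\<rho>' j g = (if 1 \<le> j \<and> j \<le> n then xv (fst (vs ! (j - 1))) g else xv j g)" for j :: nat and g :: 'g
    have ls: "lsubst \<rho> l = ncmono [rn l]" for l :: "'g letter"
      by (cases l) (auto simp: lsubst_def \<rho>_def rn_def xv_def lvar_def lstar_def)
    have ls': "lsubst \<rho>' l = ncmono [rn' l]" for l :: "'g letter"
      by (cases l) (auto simp: lsubst_def \<rho>'_def rn'_def xv_def lstar_def)
    have endo1: "endo_data G \<rho>" unfolding endo_data_def \<rho>_def using xv_FA_hom[OF grp] by auto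
    have endo2: "endo_data G \<rho>'"
    proof -
      have "1 \<le> fst (vs ! (j - 1))" if "1 \<le> j" "j \<le> n" for j
        using vsok[of "vs ! (j - 1)"] that by (auto simp: n_def)
      then show ?thesis unfolding endo_data_def \<rho>'_def using xv_FA_hom[OF grp] by auto
    qed
    define f' where "f' = psubst \<rho> f"
    have f'eq: "f' = (\<Sum>w\<in>ks f. sg (map rn w) (lk f w))"
      unfolding f'_def by (rule psubst_map[OF ls])
    have f'ids: "f' \<in> graded_star_ids G"
      using ids_tstar_ideal[OF grp fin] f endo1 unfolding f'_def tstar_ideal_def by blast
    have bk: "psubst \<rho>' f' = f"
    proof -
      have "psubst \<rho>' f' = (\<Sum>w\<in>ks f. smult (lk f w) (ncmono (map rn' (map rn w))))"
        by (simp add: f'eq psubst_sum wsubst_map[OF ls'] ncmono_def)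
      also have "\<dots> = (\<Sum>w\<in>ks f. sg w (lk f w))"
      proof (intro sum.cong refl)
        fix w assume w: "w \<in> ks f"
        have "map (rn' \<circ> rn) w = w"
        proof (rule map_idI)
          fix l assume l: "l \<in> set w"
          then have lv: "lvar l \<in> set vs" using wprops[OF w] by auto
          then have "lidx vs (lvar l) < n" by (simp add: lidx_less n_def)
          moreover have "vs ! lidx vs (lvar l) = lvar l" using nth_lidx[OF lv] .
          ultimately show "(rn' \<circ> rn) l = l"
            by (cases l) (auto simp: rn_def rn'_def lvar_def)
        qed
        then show "smult (lk f w) (ncmono (map rn' (map rn w))) = sg w (lk f w)"
          by (simp add: ncmono_def map_map)
      qed
      also have "\<dots> = f" by (rule pm_expand[symmetric])
      finally show ?thesis .
    qed
    define \<sigma> where "\<sigma> j = snd (vs ! (j - 1))" for j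
    have sig: "\<forall>j\<in>{1..n}. \<sigma> j \<in> carrier G"
  proof
    fix j assume "j \<in> {1..n}"
    then have "vs ! (j - 1) \<in> set vs" by (intro nth_mem) (auto simp: n_def)
    then show "\<sigma> j \<in> carrier G" using vsok by (simp add: \<sigma>_def)
  qed
    have keysf': "\<forall>u\<in>ks f'. \<exists>\<pi> \<gamma>. \<pi> permutes {1..n} \<and> (\<forall>j. \<gamma> j \<longrightarrow> j \<in> {1..n}) \<and> u = Wact_mono n \<sigma> \<pi> \<gamma>"
    proof
      fix u assume "u \<in> ks f'"
      then obtain w where w: "w \<in> ks f" and u: "u = map rn w"
        using keys_sum[of "\<lambda>w. sg (map rn w) (lk f w)" "ks f"] unfolding f'eq by (auto split: if_splits)
      have wp: "distinct (map lvar w)" "set (map lvar w) = set vs" "length w = n" using wprops[OF w] by auto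
      have mf: "map fst u = map (\<lambda>x. Suc (lidx vs x)) (map lvar w)" by (simp add: u rn_def)
      show "\<exists>\<pi> \<gamma>. \<pi> permutes {1..n} \<and> (\<forall>j. \<gamma> j \<longrightarrow> j \<in> {1..n}) \<and> u = Wact_mono n \<sigma> \<pi> \<gamma>"
      proof (rule word_perm)
        show "length u = n" using wp by (simp add: u)
        have "inj_on (\<lambda>x. Suc (lidx vs x)) (set vs)" using lidx_inj[of vs] unfolding inj_on_def by blast
        then have i: "inj_on (\<lambda>x. Suc (lidx vs x)) (set (map lvar w))" using wp(2) by simp
        show "distinct (map fst u)" unfolding mf using wp(1) i by (metis distinct_map)
        have "(\<lambda>x. Suc (lidx vs x)) ` set vs = Suc ` (lidx vs ` set vs)"
          by (simp add: image_image)
        also have "\<dots> = Suc ` {..<n}"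
          using lidx_image[OF dvs] by (simp add: n_def)
        also have "\<dots> = {1..n}" by (simp add: image_Suc_lessThan)
        finally have X: "(\<lambda>x. Suc (lidx vs x)) ` set vs = {1..n}" .
        have "set (map fst u) = (\<lambda>x. Suc (lidx vs x)) ` set (map lvar w)" unfolding mf by (rule set_map)
        then show "set (map fst u) = {1..n}" unfolding wp(2) X .
        show "\<forall>p<n. fst (snd (u ! p)) = \<sigma> (fst (u ! p))"
        proof (intro allI impI)
          fix p assume p: "p < n"
          have "w ! p \<in> set w" using wp p by (intro nth_mem) simp
          then have "lvar (w ! p) \<in> set vs" using wp(2) by auto
          then have "vs ! lidx vs (lvar (w ! p)) = lvar (w ! p)" by (rule nth_lidx)
          then show "fst (snd (u ! p)) = \<sigma> (fst (u ! p))"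
            using p wp by (simp add: u rn_def \<sigma>_def lvar_def)
        qed
      qed
    qed
    have "f' = Wsum n \<sigma> (\<lambda>\<pi> \<gamma>. lk f' (Wact_mono n \<sigma> \<pi> \<gamma>))" by (rule wsum_repr[OF keysf'])
    then have "f' \<in> SS" using f'ids n1 sig by blast
    then have "f' \<in> I" using SI by blast
    then have "psubst \<rho>' f' \<in> I" using I endo2 by (simp add: tstar_ideal_def)
    then show ?thesis using bk by simp
  qed
qed

end

context
  fixes G :: "('g, 'm) monoid_scheme"
  assumes grp: "group G" and fin: "finite (carrier G)"
begin

lemma multihom_in:
  assumes I: "tstar_ideal G I" and SI: "SS G \<subseteq> I"
  shows "f \<in> graded_star_ids G \<Longrightarrow> \<forall>w\<in>ks f. mdeg w = M \<Longrightarrow> f \<in> I"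
proof (induction "size M - card (set_mset M)" arbitrary: f M rule: less_induct)
  case less
  note f = less.prems(1) and hom = less.prems(2)
  have ids: "tstar_ideal G (graded_star_ids G)" by (rule ids_tstar_ideal[OF grp fin])
  show ?case
  proof (cases "\<forall>v. count M v \<le> 1")
    case True
    then show ?thesis using base_case[OF grp fin I SI f hom] by blast
  next
    case False
    then obtain v where "1 < count M v" by (auto simp: not_le)
    then have v: "2 \<le> count M v" by simp
    show ?thesis
    proof (cases "f = 0")
      case True then show ?thesis using I by (simp add: tstar_ideal_def)
    next
      case False
      then obtain w0 where w0: "w0 \<in> ks f" by fastforce
      have fFA: "f \<in> FA G" using f by (simp add: graded_star_ids_def)
      have Mw0: "mdeg w0 = M" using hom w0 by blast
      have "cnt v w0 \<noteq> 0" using v Mw0 count_mdeg[of w0 v] by simp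
      then have "v \<in> lvar ` set w0" by (simp add: cnt_zero_iff)
      then obtain l0 where l0: "l0 \<in> set w0" "lvar l0 = v" by blast
      have "letter_ok G l0" using fFA w0 l0(1) by (auto simp: FA_iff)
      then have v1: "1 \<le> fst v" using l0(2) by (auto simp: letter_ok_def lvar_def)
      define L where "L = (\<Union>w\<in>ks f. set w)"
      have finL: "finite L" by (simp add: L_def)
      define iy where "iy = Suc (Max (insert 0 (fst ` L)))"
      have lt: "fst l < iy" if "l \<in> L" for l
      proof -
        have "fst l \<le> Max (insert 0 (fst ` L))" using finL that by (intro Max_ge) auto
        then show ?thesis by (simp add: iy_def)
      qed
      have iy1: "1 \<le> iy" by (simp add: iy_def)
      let ?y = "(iy, snd v)"
      have fresh: "\<forall>w\<in>ks f. \<forall>l\<in>set w. lvar l \<noteq> ?y"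
      proof (intro ballI)
        fix w l assume "w \<in> ks f" "l \<in> set w"
        then have "l \<in> L" by (auto simp: L_def)
        then have "fst l < iy" by (rule lt)
        then show "lvar l \<noteq> ?y" by (auto simp: lvar_def)
      qed
      have vy: "v \<noteq> ?y"
      proof -
        have "l0 \<in> L" using w0 l0(1) by (auto simp: L_def)
        then have "fst l0 < iy" by (rule lt)
        then have "fst v < iy" using l0(2) by (auto simp: lvar_def)
        then show ?thesis by (cases v) auto
      qed
      have yM: "?y \<notin># M"
      proof -
        have "?y \<notin> lvar ` set w0"
        proof
          assume "?y \<in> lvar ` set w0"
          then obtain l where l: "l \<in> set w0" "lvar l = ?y" by (rule imageE) simp
          have "lvar l \<noteq> ?y" using fresh w0 l(1) by simp
          then show False using l(2) by simp
        qed
        then have "cnt ?y w0 = 0" by (simp add: cnt_zero_iff)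
        then show ?thesis using Mw0 count_mdeg[of w0 ?y] by (simp add: not_in_iff)
      qed
      define F1 where "F1 = (\<Sum>w\<in>ks f. smult (lk f w) (Ex1 v iy w))"
      have F1ids: "F1 \<in> graded_star_ids G"
        unfolding F1_def by (rule linearize[OF grp ids f iy1 fresh])
      define M' where "M' = add_mset ?y (M - {#v#})"
      have homF1: "\<forall>u\<in>ks F1. mdeg u = M'"
      proof
        fix u assume "u \<in> ks F1"
        then obtain w where w: "w \<in> ks f" "u \<in> ks (smult (lk f w) (Ex1 v iy w))"
          using keys_sum[of "\<lambda>w. smult (lk f w) (Ex1 v iy w)" "ks f"] unfolding F1_def by blast
        then have "u \<in> ks (Ex1 v iy w)" using keys_smult by blast
        then have "add_mset v (mdeg u) = add_mset ?y (mdeg w)" by (rule keys_Ex1)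
        then have "add_mset v (mdeg u) - {#v#} = add_mset ?y M - {#v#}" using hom w(1) by simp
        then show "mdeg u = M'" unfolding M'_def using diff_union_swap[OF vy] by simp
      qed
      have "0 < count M v" using v by linarith
      then have vM: "v \<in># M" by (simp only: count_greater_zero_iff)
      have sizeM': "size M' = size M"
        by (simp add: M'_def size_Suc_Diff1[OF vM])
      have setM': "set_mset M' = insert ?y (set_mset M)"
      proof -
        have "set_mset (M - {#v#}) = set_mset M"
        proof
          show "set_mset (M - {#v#}) \<subseteq> set_mset M" by (rule set_mset_mono) simp
          show "set_mset M \<subseteq> set_mset (M - {#v#})"
          proof
            fix x assume "x \<in># M"
            show "x \<in># M - {#v#}"
            proof (cases "x = v")
              case True then show ?thesis using v by (simp add: in_diff_count)
            next
              case False then show ?thesis using \<open>x \<in># M\<close> by (simp add: in_diff_count count_greater_zero_iff)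
            qed
          qed
        qed
        then show ?thesis by (simp add: M'_def)
      qed
      have cardM': "card (set_mset M') = Suc (card (set_mset M))"
        using yM by (simp add: setM')
      have "card (set_mset M') \<le> size M'" by (rule card_le_size)
      then have lessm: "size M' - card (set_mset M') < size M - card (set_mset M)"
        using sizeM' cardM' by simp
      have "F1 \<in> I" using less.hyps[OF lessm F1ids homF1] .
      moreover have "\<forall>w\<in>ks f. cnt v w = count M v"
      proof
        fix w assume "w \<in> ks f"
        then have "mdeg w = M" using hom by blast
        then show "cnt v w = count M v" using count_mdeg[of w v] by simp
      qed
      ultimately show ?thesis
        using restitute[OF grp I v1 fresh, of "count M v"] v unfolding F1_def by simp
    qed
  qed
qed

theorem main:
  shows "graded_star_ids G = tstar_hull G (SS G)"
proof
  show "tstar_hull G (SS G) \<subseteq> graded_star_ids G"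
    unfolding tstar_hull_def using ids_tstar_ideal[OF grp fin] by (intro Inter_lower) auto
  show "graded_star_ids G \<subseteq> tstar_hull G (SS G)"
  proof
    fix f assume f: "f \<in> graded_star_ids G"
    show "f \<in> tstar_hull G (SS G)"
      unfolding tstar_hull_def
    proof (intro InterI, elim CollectE conjE)
      fix I assume I: "tstar_ideal G I" and SI: "SS G \<subseteq> I"
      have ids: "tstar_ideal G (graded_star_ids G)" by (rule ids_tstar_ideal[OF grp fin])
      have "(\<Sum>M\<in>mdeg ` ks f. restr (\<lambda>w. mdeg w = M) f) \<in> I"
      proof (rule tstar_sum[OF I])
        fix M assume "M \<in> mdeg ` ks f"
        have r: "restr (\<lambda>w. mdeg w = M) f \<in> graded_star_ids G" by (rule restr_mdeg_in[OF grp ids f])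
        have "\<forall>w\<in>ks (restr (\<lambda>w. mdeg w = M) f). mdeg w = M" using keys_restrD by blast
        then show "restr (\<lambda>w. mdeg w = M) f \<in> I" using multihom_in[OF I SI r] by blast
      qed
      then show "f \<in> I" using decomp_mdeg[of f] by simp
    qed
  qed
qed

end

theorem mainTheorem1:
  fixes G :: "('g, 'm) monoid_scheme"
  assumes "group G" and "finite (carrier G)"
  shows "graded_star_ids G =
           tstar_hull G {f \<in> graded_star_ids G. \<exists>n \<sigma> a. 1 \<le> n \<and>
              (\<forall>j\<in>{1..n}. \<sigma> j \<in> carrier G) \<and> f = Wsum n \<sigma> a}"
  using main[OF assms] .

end
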